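(* Under the assumptions of the approximation theorem (open convex $\mathcal D$, $K\in\mathbb{Z}_{\ge2}$, each $L^{(n)}$ is $2K$ times continuously differentiable on $\mathcal D$ with derivatives up to order $2K$ bounded uniformly in $n$), there is a constant $C$ (depending on $K$, $\beta$ and the derivative bounds only) such that for all $\theta\in\mathcal D$, all $m\in[1,K]$, all $r\in[0,2K-m]$, all $n\ge0$ and all $a\in[1,n]$: $$\|\nabla^rc_m^{(n)}(\theta)\|\le C,\qquad\|\nabla^rp_m^{(n,a)}(\theta)\|\le C\,a^m.$$
   Context: Fix $\beta\in(0,1)$. $[a,b]$ denotes $[a,b]\cap\mathbb{Z}$; empty sums are $0$. $\nabla^kF(\theta)$ is the $k$-th derivative (symmetric $k$-linear map), $\nabla^0F=F$, and $[u_1^{\times r_1},\dots]$ means $u_1$ repeated $r_1$ times, etc. For integers $i,l\ge0$, $\mathcal K_{i,l}:=\{(k_0,\dots,k_l)\in\mathbb{Z}_{\ge0}^{l+1}:\ k_0+\dots+k_l=i,\ \sum_{j=1}^l jk_j=l\}$. Given losses $L^{(s)}:\mathcal D\to\mathbb{R}$, $s\ge0$, the memoryless coefficients and history terms are defined recursively by $c_1^{(n)}(\theta)=-\sum_{k=0}^n\beta^k\nabla L^{(n-k)}(\theta)$, $$c_m^{(n)}(\theta)=-\sum_{k=1}^n\beta^k\sum_{\substack{i,l\ge0\\ i+l=m-1}}\sum_{(i_0,\dots,i_l)\in\mathcal K_{i,l}}\frac{1}{i_0!\cdots i_l!}\nabla^{i+1}L^{(n-k)}(\theta)\big[p_1^{(n,k)}(\theta)^{\times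 i_0},\dots,p_{l+1}^{(n,k)}(\theta)^{\times i_l}\big],\ m\ge2,$$ $$p_m^{(n,a)}(\theta)=-\sum_{s=1}^a\sum_{\substack{j\ge1,\,i,l\ge0\\ i+j+l=m}}\sum_{(k_0,\dots,k_l)\in\mathcal K_{i,l}}\frac{1}{k_0!\cdots k_l!}\nabla^{i}c_j^{(n-s)}(\theta)\big[p_1^{(n,s)}(\theta)^{\times k_0},\dots,p_{l+1}^{(n,s)}(\theta)^{\times k_l}\big]$$ for $m\ge1$, $a\in[1,n]$. *)

theory Defs
  imports "HOL-Analysis.Analysis"
begin

fun Dk :: "nat \<Rightarrow> ('a::real_normed_vector \<Rightarrow> 'b::real_normed_vector) \<Rightarrow> 'a \<Rightarrow> 'a list \<Rightarrow> 'b" where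
  "Dk 0 F x us = F x"
| "Dk (Suc k) F x [] = 0"
| "Dk (Suc k) F x (u # us) = frechet_derivative (\<lambda>y. Dk k F y us) (at x) u"

definition opnorm_le :: "('a::real_normed_vector list \<Rightarrow> 'b::real_normed_vector) \<Rightarrow> nat \<Rightarrow> real \<Rightarrow> bool" where
  "opnorm_le T r C \<longleftrightarrow>
     (\<forall>us. length us = r \<longrightarrow> (\<forall>u\<in>set us. norm u \<le> 1) \<longrightarrow> norm (T us) \<le> C)"

definition Ck_on :: "nat \<Rightarrow> 'a::real_normed_vector set \<Rightarrow> ('a \<Rightarrow> 'b::real_normed_vector) \<Rightarrow> bool" where
  "Ck_on k D F \<longleftrightarrow>
     (\<forall>j<k. \<forall>us. length us = j \<longrightarrow> (\<forall>x\<in>D.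
        ((\<lambda>y. Dk j F y us) has_derivative (\<lambda>u. Dk (Suc j) F x (u # us))) (at x))) \<and>
     (\<forall>j\<le>k. \<forall>us. length us = j \<longrightarrow> continuous_on D (\<lambda>y. Dk j F y us))"

text \<open>Vector (gradient) representation of the remaining free first slot:
  T[., args] as an element of the Euclidean space.\<close>
definition gvec :: "('a::euclidean_space list \<Rightarrow> real) \<Rightarrow> 'a list \<Rightarrow> 'a" where
  "gvec T args = (\<Sum>b\<in>Basis. T (b # args) *\<^sub>R b)"

definition Kset :: "nat \<Rightarrow> nat \<Rightarrow> nat list set" where
  "Kset i l = {ks. length ks = Suc l \<and> sum_list ks = i \<and> (\<Sum>j<Suc l. j * ks ! j) = l}"

definition margs :: "nat list \<Rightarrow> (nat \<Rightarrow> 'a) \<Rightarrow> 'a list" where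
  "margs ks q = concat (map (\<lambda>j. replicate (ks ! j) (q (Suc j))) [0..<length ks])"

definition kcoef :: "nat list \<Rightarrow> real" where
  "kcoef ks = 1 / real (prod_list (map fact ks))"

text \<open>c m n = c_m^{(n)}, p m n a = p_m^{(n,a)}; the recursive defining equations on D.\<close>
definition memoryless_coeffs ::
  "real \<Rightarrow> (nat \<Rightarrow> 'a::euclidean_space \<Rightarrow> real) \<Rightarrow> 'a set \<Rightarrow>
   (nat \<Rightarrow> nat \<Rightarrow> 'a \<Rightarrow> 'a) \<Rightarrow> (nat \<Rightarrow> nat \<Rightarrow> nat \<Rightarrow> 'a \<Rightarrow> 'a) \<Rightarrow> bool" where
  "memoryless_coeffs \<beta> L D c p \<longleftrightarrow>
     (\<forall>n. \<forall>\<theta>\<in>D. c 1 n \<theta> = - (\<Sum>k\<le>n. \<beta> ^ k *\<^sub>R gvec (Dk 1 (L (n - k)) \<theta>) [])) \<and>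
     (\<forall>m\<ge>2. \<forall>n. \<forall>\<theta>\<in>D. c m n \<theta> =
        - (\<Sum>k\<in>{1..n}. \<beta> ^ k *\<^sub>R
             (\<Sum>i\<le>m - 1. \<Sum>ks\<in>Kset i (m - 1 - i).
                kcoef ks *\<^sub>R gvec (Dk (Suc i) (L (n - k)) \<theta>) (margs ks (\<lambda>q. p q n k \<theta>))))) \<and>
     (\<forall>m\<ge>1. \<forall>n. \<forall>a\<in>{1..n}. \<forall>\<theta>\<in>D. p m n a \<theta> =
        - (\<Sum>s\<in>{1..a}. \<Sum>j\<in>{1..m}. \<Sum>i\<le>m - j. \<Sum>ks\<in>Kset i (m - j - i).
             kcoef ks *\<^sub>R Dk i (c j (n - s)) \<theta> (margs ks (\<lambda>q. p q n s \<theta>))))"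

end

theory Submission imports Defs begin

lemma summable_poly_geom:
  fixes \<beta> :: real assumes "0 \<le> \<beta>" "\<beta> < 1"
  shows "summable (\<lambda>k. real k ^ N * \<beta> ^ k)"
proof -
  have lim: "(\<lambda>n. norm (real n ^ N) / norm (real (Suc n) ^ N)) \<longlonglongrightarrow> 1"
  proof -
    have "(\<lambda>n. (real n / real (Suc n)) ^ N) \<longlonglongrightarrow> 1 ^ N"
      by (intro tendsto_power LIMSEQ_n_over_Suc_n)
    then show ?thesis by (simp add: power_divide)
  qed
  have "conv_radius (\<lambda>n. real n ^ N) = 1"
    by (rule conv_radius_ratio_limit_nonzero[OF _ _ lim]) auto
  then have "ereal (norm \<beta>) < conv_radius (\<lambda>n. real n ^ N)" using assms by simp
  from summable_in_conv_radius[OF this] show ?thesis .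
qed

lemma Dk_snoc:
  "length us = j \<Longrightarrow> Dk (Suc j) F x (us @ [u]) = Dk j (\<lambda>y. frechet_derivative F (at y) u) x us"
proof (induction us arbitrary: j x)
  case Nil then show ?case by simp
next
  case (Cons w us)
  then obtain j' where j: "j = Suc j'" "length us = j'" by auto
  show ?case using Cons.IH[OF j(2)] j by simp
qed

lemma fd_local:
  assumes "open D" "x \<in> D" "\<And>y. y \<in> D \<Longrightarrow> f y = g y"
  shows "frechet_derivative f (at x) = frechet_derivative g (at x)"
proof -
  have "(\<lambda>f'. (f has_derivative f') (at x)) = (\<lambda>f'. (g has_derivative f') (at x))"
    using has_derivative_transform_within_open[OF _ assms(1,2), of f _ _ g]
      has_derivative_transform_within_open[OF _ assms(1,2), of g _ _ f] assms(3)
    by (intro ext iffI) auto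
  then show ?thesis unfolding frechet_derivative_def by simp
qed

lemma Dk_local:
  assumes "open D" "x \<in> D" "\<And>y. y \<in> D \<Longrightarrow> f y = g y"
  shows "Dk j f x us = Dk j g x us"
  using assms(2)
proof (induction j arbitrary: x us)
  case 0 then show ?case using assms by simp
next
  case (Suc j)
  show ?case
  proof (cases us)
    case Nil then show ?thesis by simp
  next
    case (Cons w us')
    have "frechet_derivative (\<lambda>y. Dk j f y us') (at x) = frechet_derivative (\<lambda>y. Dk j g y us') (at x)"
      by (rule fd_local[OF assms(1) Suc.prems]) (rule Suc.IH)
    then show ?thesis using Cons by simp
  qed
qed

fun Diff :: "nat \<Rightarrow> 'a::real_normed_vector set \<Rightarrow> ('a \<Rightarrow> 'b::real_normed_vector) \<Rightarrow> bool" where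
  "Diff 0 D f = True"
| "Diff (Suc N) D f = ((\<forall>x\<in>D. (f has_derivative frechet_derivative f (at x)) (at x)) \<and>
      (\<forall>u. Diff N D (\<lambda>y. frechet_derivative f (at y) u)))"

fun Bnd :: "nat \<Rightarrow> 'a::real_normed_vector set \<Rightarrow> ('a \<Rightarrow> 'b::real_normed_vector) \<Rightarrow> real \<Rightarrow> bool" where
  "Bnd 0 D f B = (\<forall>x\<in>D. norm (f x) \<le> B)"
| "Bnd (Suc N) D f B = ((\<forall>x\<in>D. norm (f x) \<le> B) \<and>
      (\<forall>u. norm u \<le> 1 \<longrightarrow> Bnd N D (\<lambda>y. frechet_derivative f (at y) u) B))"

lemma Bnd_val: "Bnd N D f B \<Longrightarrow> x \<in> D \<Longrightarrow> norm (f x) \<le> B"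
  by (cases N) auto

lemma Diff_cong:
  assumes "open D" "\<And>y. y \<in> D \<Longrightarrow> f y = g y" "Diff N D f"
  shows "Diff N D g"
  using assms(2,3)
proof (induction N arbitrary: f g)
  case 0 then show ?case by simp
next
  case (Suc N)
  have fd: "frechet_derivative f (at x) = frechet_derivative g (at x)" if "x \<in> D" for x
    using fd_local[OF assms(1) that Suc.prems(1)] .
  have A: "(g has_derivative frechet_derivative g (at x)) (at x)" if x: "x \<in> D" for x
  proof -
    have "(f has_derivative frechet_derivative f (at x)) (at x)" using Suc.prems(2) x by simp
    from has_derivative_transform_within_open[OF this assms(1) x Suc.prems(1)]
    show ?thesis using fd[OF x] by simp
  qed
  have B: "Diff N D (\<lambda>y. frechet_derivative g (at y) u)" for u
  proof (rule Suc.IH[of "\<lambda>y. frechet_derivative f (at y) u"])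
    show "Diff N D (\<lambda>y. frechet_derivative f (at y) u)" using Suc.prems(2) by simp
    fix y assume "y \<in> D" then show "frechet_derivative f (at y) u = frechet_derivative g (at y) u"
      using fd by simp
  qed
  show ?case using A B by simp
qed

lemma Bnd_cong:
  assumes "open D" "\<And>y. y \<in> D \<Longrightarrow> f y = g y" "Bnd N D f B"
  shows "Bnd N D g B"
  using assms(2,3)
proof (induction N arbitrary: f g)
  case 0 then show ?case by simp
next
  case (Suc N)
  have fd: "frechet_derivative f (at x) = frechet_derivative g (at x)" if "x \<in> D" for x
    using fd_local[OF assms(1) that Suc.prems(1)] .
  have A: "norm (g x) \<le> B" if "x \<in> D" for x
    using Suc.prems that by (metis Bnd_val)
  have B: "Bnd N D (\<lambda>y. frechet_derivative g (at y) u) B" if u: "norm u \<le> 1" for u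
  proof (rule Suc.IH[of "\<lambda>y. frechet_derivative f (at y) u"])
    show "Bnd N D (\<lambda>y. frechet_derivative f (at y) u) B" using Suc.prems(2) u by simp
    fix y assume "y \<in> D" then show "frechet_derivative f (at y) u = frechet_derivative g (at y) u"
      using fd by simp
  qed
  show ?case using A B by simp
qed

lemma DiffS_mono: "Diff (Suc N) D f \<Longrightarrow> Diff N D f"
  by (induction N arbitrary: f) auto

lemma Diff_mono_le: "Diff N D f \<Longrightarrow> M \<le> N \<Longrightarrow> Diff M D f"
proof (induction N)
  case (Suc N) then show ?case by (metis DiffS_mono le_Suc_eq)
qed simp

lemma Bnd_mono: "Bnd (Suc N) D f B \<Longrightarrow> Bnd N D f B"
  by (induction N arbitrary: f) auto

lemma Bnd_mono_le: "Bnd N D f B \<Longrightarrow> M \<le> N \<Longrightarrow> Bnd M D f B"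
proof (induction N)
  case (Suc N) then show ?case by (metis Bnd_mono le_Suc_eq)
qed simp

lemma Bnd_mono_B: "Bnd N D f A \<Longrightarrow> A \<le> B \<Longrightarrow> Bnd N D f B"
  by (induction N arbitrary: f) force+

lemma Diff_hd: "Diff (Suc N) D f \<Longrightarrow> x \<in> D \<Longrightarrow> (f has_derivative frechet_derivative f (at x)) (at x)"
  by simp

lemma Diff_deriv_gen: "Diff N D f \<Longrightarrow> 0 < N \<Longrightarrow> x \<in> D \<Longrightarrow> (f has_derivative frechet_derivative f (at x)) (at x)"
  by (cases N) auto


lemma fd_eq: "(f has_derivative f') (at x) \<Longrightarrow> frechet_derivative f (at x) = f'"
  using frechet_derivative_at by metis

lemma Diff_lin:
  assumes "open D" "bounded_linear h" "Diff N D f"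
  shows "Diff N D (\<lambda>y. h (f y))"
  using assms(3)
proof (induction N arbitrary: f)
  case 0 then show ?case by simp
next
  case (Suc N)
  have d: "((\<lambda>y. h (f y)) has_derivative (\<lambda>u. h (frechet_derivative f (at x) u))) (at x)" if "x \<in> D" for x
  proof -
    have "(f has_derivative frechet_derivative f (at x)) (at x)" using Suc.prems that by simp
    from bounded_linear.has_derivative[OF assms(2) this] show ?thesis .
  qed
  have e: "frechet_derivative (\<lambda>y. h (f y)) (at x) = (\<lambda>u. h (frechet_derivative f (at x) u))" if "x \<in> D" for x
    using fd_eq[OF d[OF that]] .
  show ?case
  proof (simp only: Diff.simps, intro conjI ballI allI)
    fix x assume "x \<in> D" then show "((\<lambda>y. h (f y)) has_derivative frechet_derivative (\<lambda>y. h (f y)) (at x)) (at x)"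
      using d e by simp
  next
    fix u
    have "Diff N D (\<lambda>y. h (frechet_derivative f (at y) u))" using Suc by simp
    then show "Diff N D (\<lambda>y. frechet_derivative (\<lambda>y. h (f y)) (at y) u)"
      by (rule Diff_cong[OF assms(1), rotated]) (simp add: e)
  qed
qed

lemma Diff_add:
  assumes "open D" "Diff N D f" "Diff N D g"
  shows "Diff N D (\<lambda>y. f y + g y)"
  using assms(2,3)
proof (induction N arbitrary: f g)
  case 0 then show ?case by simp
next
  case (Suc N)
  have d: "((\<lambda>y. f y + g y) has_derivative (\<lambda>u. frechet_derivative f (at x) u + frechet_derivative g (at x) u)) (at x)" if "x \<in> D" for x
    using has_derivative_add Suc.prems that by simp
  have e: "frechet_derivative (\<lambda>y. f y + g y) (at x) = (\<lambda>u. frechet_derivative f (at x) u + frechet_derivative g (at x) u)" if "x \<in> D" for x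
    using fd_eq[OF d[OF that]] .
  show ?case
  proof (simp only: Diff.simps, intro conjI ballI allI)
    fix x assume "x \<in> D" then show "((\<lambda>y. f y + g y) has_derivative frechet_derivative (\<lambda>y. f y + g y) (at x)) (at x)"
      using d e by simp
  next
    fix u
    have "Diff N D (\<lambda>y. frechet_derivative f (at y) u + frechet_derivative g (at y) u)" using Suc by simp
    then show "Diff N D (\<lambda>y. frechet_derivative (\<lambda>y. f y + g y) (at y) u)"
      by (rule Diff_cong[OF assms(1), rotated]) (simp add: e)
  qed
qed

lemma Diff_const:
  fixes v :: "'b::real_normed_vector" and D :: "'a::real_normed_vector set"
  shows "Diff N D (\<lambda>y. v)"
proof (induction N arbitrary: v)
  case (Suc N)
  have e: "frechet_derivative (\<lambda>y. v) (at x) = (\<lambda>u. 0)" for x :: 'a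
    by (rule fd_eq) (rule has_derivative_const)
  show ?case using Suc by (simp add: e)
qed simp

lemma Diff_mult:
  fixes f :: "'a::real_normed_vector \<Rightarrow> real"
  assumes "open D" "Diff N D f" "Diff N D g"
  shows "Diff N D (\<lambda>y. f y *\<^sub>R g y)"
  using assms(2,3)
proof (induction N arbitrary: f g)
  case 0 then show ?case by simp
next
  case (Suc N)
  have d: "((\<lambda>y. f y *\<^sub>R g y) has_derivative (\<lambda>u. f x *\<^sub>R frechet_derivative g (at x) u + frechet_derivative f (at x) u *\<^sub>R g x)) (at x)" if "x \<in> D" for x
    using has_derivative_scaleR Suc.prems that by simp
  have e: "frechet_derivative (\<lambda>y. f y *\<^sub>R g y) (at x) = (\<lambda>u. f x *\<^sub>R frechet_derivative g (at x) u + frechet_derivative f (at x) u *\<^sub>R g x)" if "x \<in> D" for x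
    using fd_eq[OF d[OF that]] .
  show ?case
  proof (simp only: Diff.simps, intro conjI ballI allI)
    fix x assume "x \<in> D" then show "((\<lambda>y. f y *\<^sub>R g y) has_derivative frechet_derivative (\<lambda>y. f y *\<^sub>R g y) (at x)) (at x)"
      using d e by simp
  next
    fix u
    have f: "Diff N D f" "Diff N D g" using Suc.prems DiffS_mono by blast+
    have "Diff N D (\<lambda>y. f y *\<^sub>R frechet_derivative g (at y) u + frechet_derivative f (at y) u *\<^sub>R g y)"
      using Suc.prems f by (intro Diff_add[OF assms(1)] Suc.IH) auto
    then show "Diff N D (\<lambda>y. frechet_derivative (\<lambda>y. f y *\<^sub>R g y) (at y) u)"
      by (rule Diff_cong[OF assms(1), rotated]) (simp add: e)
  qed
qed

lemma Diff_sum: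
  assumes "open D" "finite A" "\<And>i. i \<in> A \<Longrightarrow> Diff N D (f i)"
  shows "Diff N D (\<lambda>y. \<Sum>i\<in>A. f i y)"
  using assms(2,3)
proof (induction A rule: finite_induct)
  case empty then show ?case using Diff_const[of N D 0] by simp
next
  case (insert a A) then show ?case by (simp add: Diff_add[OF assms(1)])
qed

lemma lin_bound:
  assumes "\<And>z. norm (h z) \<le> Ch * norm z" "0 \<le> Ch" "norm v \<le> B"
  shows "norm (h v) \<le> Ch * B"
proof -
  have "norm (h v) \<le> Ch * norm v" by (rule assms(1))
  also have "\<dots> \<le> Ch * B" by (rule mult_left_mono[OF assms(3,2)])
  finally show ?thesis .
qed

lemma Bnd_lin:
  assumes "open D" "bounded_linear h" "\<And>z. norm (h z) \<le> Ch * norm z" "0 \<le> Ch" "Diff N D f" "Bnd N D f B"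
  shows "Bnd N D (\<lambda>y. h (f y)) (Ch * B)"
  using assms(5,6)
proof (induction N arbitrary: f)
  case 0 then show ?case using lin_bound[OF assms(3,4)] by simp
next
  case (Suc N)
  have d: "((\<lambda>y. h (f y)) has_derivative (\<lambda>u. h (frechet_derivative f (at x) u))) (at x)" if "x \<in> D" for x
  proof -
    have "(f has_derivative frechet_derivative f (at x)) (at x)" using Suc.prems that by simp
    from bounded_linear.has_derivative[OF assms(2) this] show ?thesis .
  qed
  have e: "frechet_derivative (\<lambda>y. h (f y)) (at x) = (\<lambda>u. h (frechet_derivative f (at x) u))" if "x \<in> D" for x
    using fd_eq[OF d[OF that]] .
  show ?case
  proof (simp only: Bnd.simps, intro conjI ballI allI impI)
    fix x assume "x \<in> D" then show "norm (h (f x)) \<le> Ch * B"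
      using lin_bound[OF assms(3,4) Bnd_val[OF Suc.prems(2)]] by blast
  next
    fix u :: 'a assume u: "norm u \<le> 1"
    have "Bnd N D (\<lambda>y. h (frechet_derivative f (at y) u)) (Ch * B)" using Suc u by simp
    then show "Bnd N D (\<lambda>y. frechet_derivative (\<lambda>y. h (f y)) (at y) u) (Ch * B)"
      by (rule Bnd_cong[OF assms(1), rotated]) (simp add: e)
  qed
qed

lemma Bnd_add:
  assumes "open D" "Diff N D f" "Diff N D g" "Bnd N D f A" "Bnd N D g B"
  shows "Bnd N D (\<lambda>y. f y + g y) (A + B)"
  using assms(2-5)
proof (induction N arbitrary: f g)
  case 0 then show ?case by (simp add: norm_triangle_mono)
next
  case (Suc N)
  have d: "((\<lambda>y. f y + g y) has_derivative (\<lambda>u. frechet_derivative f (at x) u + frechet_derivative g (at x) u)) (at x)" if "x \<in> D" for x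
    using has_derivative_add Suc.prems that by simp
  have e: "frechet_derivative (\<lambda>y. f y + g y) (at x) = (\<lambda>u. frechet_derivative f (at x) u + frechet_derivative g (at x) u)" if "x \<in> D" for x
    using fd_eq[OF d[OF that]] .
  show ?case
  proof (simp only: Bnd.simps, intro conjI ballI allI impI)
    fix x assume "x \<in> D" then show "norm (f x + g x) \<le> A + B"
      using Bnd_val[OF Suc.prems(3)] Bnd_val[OF Suc.prems(4)] by (simp add: norm_triangle_mono)
  next
    fix u :: 'a assume u: "norm u \<le> 1"
    have "Bnd N D (\<lambda>y. frechet_derivative f (at y) u + frechet_derivative g (at y) u) (A + B)" using Suc u by simp
    then show "Bnd N D (\<lambda>y. frechet_derivative (\<lambda>y. f y + g y) (at y) u) (A + B)"
      by (rule Bnd_cong[OF assms(1), rotated]) (simp add: e)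
  qed
qed

lemma Bnd_const:
  fixes v :: "'b::real_normed_vector" and D :: "'a::real_normed_vector set"
  shows "norm v \<le> B \<Longrightarrow> Bnd N D (\<lambda>y. v) B"
proof (induction N arbitrary: v)
  case (Suc N)
  have e: "frechet_derivative (\<lambda>y. v) (at x) = (\<lambda>u. 0)" for x :: 'a
    by (rule fd_eq) (rule has_derivative_const)
  have "Bnd N D (\<lambda>y. 0::'b) B" using Suc.IH[of 0] Suc.prems norm_ge_zero[of v] by simp
  then show ?case using Suc by (simp add: e)
qed simp

lemma Bnd_mult:
  fixes f :: "'a::real_normed_vector \<Rightarrow> real"
  assumes "open D" "Diff N D f" "Diff N D g" "Bnd N D f A" "Bnd N D g B" "0 \<le> A" "0 \<le> B"
  shows "Bnd N D (\<lambda>y. f y *\<^sub>R g y) (2 ^ N * A * B)"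
  using assms(2-5)
proof (induction N arbitrary: f g)
  case 0 then show ?case using assms(6,7) by (simp add: mult_mono')
next
  case (Suc N)
  have d: "((\<lambda>y. f y *\<^sub>R g y) has_derivative (\<lambda>u. f x *\<^sub>R frechet_derivative g (at x) u + frechet_derivative f (at x) u *\<^sub>R g x)) (at x)" if "x \<in> D" for x
    using has_derivative_scaleR Suc.prems that by simp
  have e: "frechet_derivative (\<lambda>y. f y *\<^sub>R g y) (at x) = (\<lambda>u. f x *\<^sub>R frechet_derivative g (at x) u + frechet_derivative f (at x) u *\<^sub>R g x)" if "x \<in> D" for x
    using fd_eq[OF d[OF that]] .
  show ?case
  proof (simp only: Bnd.simps, intro conjI ballI allI impI)
    fix x assume x: "x \<in> D"
    have "norm (f x *\<^sub>R g x) \<le> A * B" using Bnd_val[OF Suc.prems(3) x] Bnd_val[OF Suc.prems(4) x] assms(6,7)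
      by (simp add: mult_mono')
    also have "\<dots> \<le> 2 ^ Suc N * A * B"
    proof -
      have "1 \<le> (2::real) ^ Suc N" by (rule one_le_power) simp
      from mult_right_mono[OF this, of "A * B"] assms(6,7) show ?thesis by (simp add: mult.assoc)
    qed
    finally show "norm (f x *\<^sub>R g x) \<le> 2 ^ Suc N * A * B" .
  next
    fix u :: 'a assume u: "norm u \<le> 1"
    have f: "Diff N D f" "Diff N D g" "Bnd N D f A" "Bnd N D g B" using Suc.prems DiffS_mono Bnd_mono by blast+
    have g1: "Diff N D (\<lambda>y. frechet_derivative g (at y) u)" "Bnd N D (\<lambda>y. frechet_derivative g (at y) u) B"
      using Suc.prems(2,4) u by simp_all
    have f1: "Diff N D (\<lambda>y. frechet_derivative f (at y) u)" "Bnd N D (\<lambda>y. frechet_derivative f (at y) u) A"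
      using Suc.prems(1,3) u by simp_all
    have a: "Bnd N D (\<lambda>y. f y *\<^sub>R frechet_derivative g (at y) u) (2 ^ N * A * B)"
      by (rule Suc.IH[OF f(1) g1(1) f(3) g1(2)])
    have b: "Bnd N D (\<lambda>y. frechet_derivative f (at y) u *\<^sub>R g y) (2 ^ N * A * B)"
      by (rule Suc.IH[OF f1(1) f(2) f1(2) f(4)])
    have "Bnd N D (\<lambda>y. f y *\<^sub>R frechet_derivative g (at y) u + frechet_derivative f (at y) u *\<^sub>R g y) (2 ^ N * A * B + 2 ^ N * A * B)"
      by (rule Bnd_add[OF assms(1) Diff_mult[OF assms(1) f(1) g1(1)] Diff_mult[OF assms(1) f1(1) f(2)] a b])
    moreover have "2 ^ N * A * B + 2 ^ N * A * B = 2 ^ Suc N * A * B" by simp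
    ultimately have "Bnd N D (\<lambda>y. f y *\<^sub>R frechet_derivative g (at y) u + frechet_derivative f (at y) u *\<^sub>R g y) (2 ^ Suc N * A * B)"
      by simp
    then show "Bnd N D (\<lambda>y. frechet_derivative (\<lambda>y. f y *\<^sub>R g y) (at y) u) (2 ^ Suc N * A * B)"
      by (rule Bnd_cong[OF assms(1), rotated]) (simp add: e)
  qed
qed

lemma Bnd_sum:
  assumes "open D" "finite A" "\<And>i. i \<in> A \<Longrightarrow> Diff N D (f i)" "\<And>i. i \<in> A \<Longrightarrow> Bnd N D (f i) (B i)"
  shows "Bnd N D (\<lambda>y. \<Sum>i\<in>A. f i y) (\<Sum>i\<in>A. B i)"
  using assms(2-4)
proof (induction A rule: finite_induct)
  case empty then show ?case using Bnd_const[of 0 0 N D] by simp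
next
  case (insert a A) then show ?case
    by (simp add: Bnd_add[OF assms(1)] Diff_sum[OF assms(1)])
qed


lemma fd_add_eq: "(f has_derivative f') (at x) \<Longrightarrow> (g has_derivative g') (at x) \<Longrightarrow>
   frechet_derivative (\<lambda>y. f y + g y) (at x) = (\<lambda>u. f' u + g' u)"
  by (rule fd_eq) (rule has_derivative_add)

lemma fd_lin_eq: "bounded_linear h \<Longrightarrow> (f has_derivative f') (at x) \<Longrightarrow>
   frechet_derivative (\<lambda>y. h (f y)) (at x) = (\<lambda>u. h (f' u))"
  by (rule fd_eq) (rule bounded_linear.has_derivative)

lemma Dk_add:
  assumes "open D"
  shows "Diff k D f \<Longrightarrow> Diff k D g \<Longrightarrow> x \<in> D \<Longrightarrow> length us = k \<Longrightarrow>
    Dk k (\<lambda>y. f y + g y) x us = Dk k f x us + Dk k g x us"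
proof (induction k arbitrary: f g x us)
  case 0 then show ?case by simp
next
  case (Suc k)
  obtain us' u where us: "us = us' @ [u]" using Suc.prems(4) by (cases us rule: rev_exhaust) auto
  have l: "length us' = k" using us Suc.prems(4) by simp
  have loc: "Dk k (\<lambda>y. frechet_derivative (\<lambda>y. f y + g y) (at y) u) x us' =
      Dk k (\<lambda>y. frechet_derivative f (at y) u + frechet_derivative g (at y) u) x us'"
  proof (rule Dk_local[OF assms Suc.prems(3)])
    fix y assume y: "y \<in> D"
    have "(f has_derivative frechet_derivative f (at y)) (at y)" "(g has_derivative frechet_derivative g (at y)) (at y)"
      using Suc.prems(1,2) y by simp_all
    from fd_add_eq[OF this] show "frechet_derivative (\<lambda>y. f y + g y) (at y) u = frechet_derivative f (at y) u + frechet_derivative g (at y) u"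
      by simp
  qed
  have d: "Diff k D (\<lambda>y. frechet_derivative f (at y) u)" "Diff k D (\<lambda>y. frechet_derivative g (at y) u)"
    using Suc.prems(1,2) by simp_all
  show ?case unfolding us Dk_snoc[OF l] loc using Suc.IH[OF d Suc.prems(3) l] .
qed

lemma Dk_lin:
  assumes "open D" "bounded_linear h"
  shows "Diff k D f \<Longrightarrow> x \<in> D \<Longrightarrow> length us = k \<Longrightarrow>
    Dk k (\<lambda>y. h (f y)) x us = h (Dk k f x us)"
proof (induction k arbitrary: f x us)
  case 0 then show ?case by simp
next
  case (Suc k)
  obtain us' u where us: "us = us' @ [u]" using Suc.prems(3) by (cases us rule: rev_exhaust) auto
  have l: "length us' = k" using us Suc.prems(3) by simp
  have loc: "Dk k (\<lambda>y. frechet_derivative (\<lambda>y. h (f y)) (at y) u) x us' =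
      Dk k (\<lambda>y. h (frechet_derivative f (at y) u)) x us'"
  proof (rule Dk_local[OF assms(1) Suc.prems(2)])
    fix y assume y: "y \<in> D"
    have "(f has_derivative frechet_derivative f (at y)) (at y)"
      using Suc.prems(1) y by simp_all
    from fd_lin_eq[OF assms(2) this] show "frechet_derivative (\<lambda>y. h (f y)) (at y) u = h (frechet_derivative f (at y) u)"
      by simp
  qed
  have d: "Diff k D (\<lambda>y. frechet_derivative f (at y) u)"
    using Suc.prems(1) by simp_all
  show ?case unfolding us Dk_snoc[OF l] loc using Suc.IH[OF d Suc.prems(2) l] .
qed

lemma Dk_multilin:
  assumes "open D"
  shows "Diff N D F \<Longrightarrow> x \<in> D \<Longrightarrow> length pre + length post + 1 \<le> N \<Longrightarrow>
    linear (\<lambda>v. Dk (length pre + length post + 1) F x (pre @ v # post))"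
proof (induction post arbitrary: F N rule: rev_induct)
  case Nil
  obtain N' where N: "N = Suc N'" using Nil.prems(3) by (cases N) auto
  let ?G = "\<lambda>v y. frechet_derivative F (at y) v"
  have dG: "Diff (length pre) D (?G v)" for v
    using Nil.prems(1,3) N Diff_mono_le[of N' D "?G v" "length pre"] by simp
  have bl: "bounded_linear (frechet_derivative F (at y))" if "y \<in> D" for y
  proof -
    have "(F has_derivative frechet_derivative F (at y)) (at y)" using Nil.prems(1) N that by simp
    then show ?thesis by (rule has_derivative_bounded_linear)
  qed
  have eq: "Dk (length pre + length [] + 1) F x (pre @ [v]) = Dk (length pre) (?G v) x pre" for v
    using Dk_snoc[of pre "length pre" F x v] by simp
  show ?case unfolding append_Nil2
  proof (rule linearI, unfold eq)
    fix v w
    have "Dk (length pre) (?G (v + w)) x pre = Dk (length pre) (\<lambda>y. ?G v y + ?G w y) x pre"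
      by (rule Dk_local[OF assms Nil.prems(2)]) (simp add: linear_add bounded_linear.linear[OF bl])
    also have "\<dots> = Dk (length pre) (?G v) x pre + Dk (length pre) (?G w) x pre"
      by (rule Dk_add[OF assms dG dG Nil.prems(2)]) simp
    finally show "Dk (length pre) (?G (v + w)) x pre = Dk (length pre) (?G v) x pre + Dk (length pre) (?G w) x pre" .
  next
    fix c v
    have "Dk (length pre) (?G (c *\<^sub>R v)) x pre = Dk (length pre) (\<lambda>y. c *\<^sub>R ?G v y) x pre"
      by (rule Dk_local[OF assms Nil.prems(2)]) (simp add: linear_scale bounded_linear.linear[OF bl])
    also have "\<dots> = c *\<^sub>R Dk (length pre) (?G v) x pre"
      by (rule Dk_lin[OF assms bounded_linear_scaleR_right dG Nil.prems(2)]) simp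
    finally show "Dk (length pre) (?G (c *\<^sub>R v)) x pre = c *\<^sub>R Dk (length pre) (?G v) x pre" .
  qed
next
  case (snoc u post)
  obtain N' where N: "N = Suc N'" using snoc.prems(3) by (cases N) auto
  let ?G = "\<lambda>y. frechet_derivative F (at y) u"
  have dG: "Diff N' D ?G" using snoc.prems(1) N by simp
  have eq: "Dk (length pre + length (post @ [u]) + 1) F x (pre @ v # post @ [u]) =
      Dk (length pre + length post + 1) ?G x (pre @ v # post)" for v
    using Dk_snoc[of "pre @ v # post" "length pre + length post + 1" F x u] by simp
  show ?case unfolding eq
    by (rule snoc.IH[OF dG snoc.prems(2)]) (use snoc.prems(3) N in simp)
qed

fun Ex :: "('a::euclidean_space list \<Rightarrow> 'b::real_vector) \<Rightarrow> 'a list \<Rightarrow> 'a list \<Rightarrow> 'b" where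
  "Ex T pre [] = T pre"
| "Ex T pre (v # vs) = (\<Sum>b\<in>Basis. (v \<bullet> b) *\<^sub>R Ex T (pre @ [b]) vs)"

lemma Ex_eq:
  assumes mlin: "\<And>pre' post. length pre' + length post + 1 = k \<Longrightarrow> linear (\<lambda>v. T (pre' @ v # post))"
  shows "length pre + length vs = k \<Longrightarrow> T (pre @ vs) = Ex T pre vs"
proof (induction vs arbitrary: pre)
  case Nil then show ?case by simp
next
  case (Cons v vs)
  have lin: "linear (\<lambda>w. T (pre @ w # vs))" using mlin Cons.prems by simp
  have "T (pre @ v # vs) = T (pre @ (\<Sum>b\<in>Basis. (v \<bullet> b) *\<^sub>R b) # vs)"
    by (simp add: euclidean_representation)
  also have "\<dots> = (\<Sum>b\<in>Basis. (v \<bullet> b) *\<^sub>R T (pre @ b # vs))"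
    using linear_sum[OF lin, of "\<lambda>b. (v \<bullet> b) *\<^sub>R b" Basis] linear_scale[OF lin]
    by (simp add: o_def)
  also have "\<dots> = (\<Sum>b\<in>Basis. (v \<bullet> b) *\<^sub>R Ex T (pre @ [b]) vs)"
    using Cons.IH[of "pre @ [_]"] Cons.prems by simp
  finally show ?case by simp
qed


lemma L_SM:
  assumes "Ck_on K2 D L" "\<forall>\<theta>\<in>D. \<forall>k. 1 \<le> k \<longrightarrow> k \<le> K2 \<longrightarrow> opnorm_le (Dk k L \<theta>) k M"
  shows "k + N \<le> K2 \<Longrightarrow> length ws = k \<Longrightarrow> Diff N D (\<lambda>y. Dk k L y ws) \<and>
     (1 \<le> k \<longrightarrow> (\<forall>w\<in>set ws. norm w \<le> 1) \<longrightarrow> Bnd N D (\<lambda>y. Dk k L y ws) M)"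
proof (induction N arbitrary: k ws)
  case 0 then show ?case using assms(2) unfolding opnorm_le_def by auto
next
  case (Suc N)
  have hd: "((\<lambda>y. Dk k L y ws) has_derivative (\<lambda>u. Dk (Suc k) L x (u # ws))) (at x)" if "x \<in> D" for x
    using assms(1) Suc.prems that unfolding Ck_on_def by auto
  have IH: "Diff N D (\<lambda>y. Dk (Suc k) L y (u # ws)) \<and>
     ((\<forall>w\<in>set (u # ws). norm w \<le> 1) \<longrightarrow> Bnd N D (\<lambda>y. Dk (Suc k) L y (u # ws)) M)" for u
    using Suc.IH[of "Suc k" "u # ws"] Suc.prems by simp
  have val: "norm (Dk k L x ws) \<le> M" if "x \<in> D" "1 \<le> k" "\<forall>w\<in>set ws. norm w \<le> 1" for x
    using assms(2) that Suc.prems unfolding opnorm_le_def by auto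
  show ?case using hd IH val by simp
qed

lemma Dk_fixed_Diff: "Diff (N + length ws) D F \<Longrightarrow> Diff N D (\<lambda>y. Dk (length ws) F y ws)"
proof (induction ws arbitrary: F rule: rev_induct)
  case Nil then show ?case by simp
next
  case (snoc u ws)
  have "Diff (N + length ws) D (\<lambda>y. frechet_derivative F (at y) u)" using snoc.prems by simp
  from snoc.IH[OF this] show ?case using Dk_snoc[of ws "length ws" F _ u] by simp
qed

lemma Dk_fixed_Bnd: "Bnd (N + length ws) D F B \<Longrightarrow> \<forall>w\<in>set ws. norm w \<le> 1 \<Longrightarrow> Bnd N D (\<lambda>y. Dk (length ws) F y ws) B"
proof (induction ws arbitrary: F rule: rev_induct)
  case Nil then show ?case by simp
next
  case (snoc u ws)
  have "Bnd (N + length ws) D (\<lambda>y. frechet_derivative F (at y) u) B" using snoc.prems by simp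
  from snoc.IH[OF this] snoc.prems(2) show ?case using Dk_snoc[of ws "length ws" F _ u] by simp
qed

lemma Bnd_opnorm: "Bnd N D F B \<Longrightarrow> r \<le> N \<Longrightarrow> \<theta> \<in> D \<Longrightarrow> opnorm_le (Dk r F \<theta>) r B"
  unfolding opnorm_le_def
proof (intro allI impI)
  fix us :: "'a list" assume a: "Bnd N D F B" "r \<le> N" "\<theta> \<in> D" "length us = r" "\<forall>u\<in>set us. norm u \<le> 1"
  have "Bnd (0 + length us) D F B" using Bnd_mono_le[OF a(1)] a(2,4) by simp
  from Dk_fixed_Bnd[OF this a(5)] have "Bnd 0 D (\<lambda>y. Dk (length us) F y us) B" .
  then show "norm (Dk r F \<theta> us) \<le> B" using a(3,4) by simp
qed

lemma inner_basis_bound: "b \<in> Basis \<Longrightarrow> norm (z \<bullet> b) \<le> 1 * norm z"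
  using Cauchy_Schwarz_ineq2[of z b] by simp

lemma SM_Ex:
  fixes F :: "'a::euclidean_space \<Rightarrow> 'b::real_normed_vector"
  assumes "open D"
    and HF: "\<And>ws. length ws = k \<Longrightarrow> set ws \<subseteq> Basis \<Longrightarrow> Diff N D (\<lambda>y. Dk k F y ws) \<and> Bnd N D (\<lambda>y. Dk k F y ws) BF"
    and "0 \<le> BF"
  shows "(\<forall>g\<in>set gs. Diff N D (fst g) \<and> Bnd N D (fst g) (snd g) \<and> 0 \<le> snd g) \<Longrightarrow> set pre \<subseteq> Basis \<Longrightarrow>
    length pre + length gs = k \<Longrightarrow>
    Diff N D (\<lambda>y. Ex (Dk k F y) pre (map (\<lambda>g. fst g y) gs)) \<and>
    Bnd N D (\<lambda>y. Ex (Dk k F y) pre (map (\<lambda>g. fst g y) gs)) ((real DIM('a) * 2 ^ N) ^ length gs * BF * prod_list (map snd gs))"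
proof (induction gs arbitrary: pre)
  case Nil then show ?case using HF by simp
next
  case (Cons g gs)
  let ?B = "(real DIM('a) * 2 ^ N) ^ length gs * BF * prod_list (map snd gs)"
  have B0: "0 \<le> ?B" using Cons.prems(1) assms(3) by (auto intro!: prod_list_nonneg mult_nonneg_nonneg)
  have g: "Diff N D (fst g)" "Bnd N D (fst g) (snd g)" "0 \<le> snd g" using Cons.prems(1) by auto
  have IH: "Diff N D (\<lambda>y. Ex (Dk k F y) (pre @ [b]) (map (\<lambda>g. fst g y) gs)) \<and>
      Bnd N D (\<lambda>y. Ex (Dk k F y) (pre @ [b]) (map (\<lambda>g. fst g y) gs)) ?B" if b: "b \<in> Basis" for b
    using Cons.IH[of "pre @ [b]"] Cons.prems b by simp
  have gb: "Diff N D (\<lambda>y. fst g y \<bullet> b)" "Bnd N D (\<lambda>y. fst g y \<bullet> b) (1 * snd g)" if b: "b \<in> Basis" for b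
    using Diff_lin[OF assms(1) bounded_linear_inner_left g(1)]
      Bnd_lin[OF assms(1) bounded_linear_inner_left inner_basis_bound[OF b] _ g(1) g(2)] by simp_all
  have T: "Diff N D (\<lambda>y. (fst g y \<bullet> b) *\<^sub>R Ex (Dk k F y) (pre @ [b]) (map (\<lambda>g. fst g y) gs))"
     "Bnd N D (\<lambda>y. (fst g y \<bullet> b) *\<^sub>R Ex (Dk k F y) (pre @ [b]) (map (\<lambda>g. fst g y) gs)) (2 ^ N * (1 * snd g) * ?B)"
    if b: "b \<in> Basis" for b
    using Diff_mult[OF assms(1) gb(1)[OF b] conjunct1[OF IH[OF b]]]
      Bnd_mult[OF assms(1) gb(1)[OF b] conjunct1[OF IH[OF b]] gb(2)[OF b] conjunct2[OF IH[OF b]] _ B0] g(3)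
    by simp_all
  have S: "Diff N D (\<lambda>y. \<Sum>b\<in>Basis. (fst g y \<bullet> b) *\<^sub>R Ex (Dk k F y) (pre @ [b]) (map (\<lambda>g. fst g y) gs))"
     "Bnd N D (\<lambda>y. \<Sum>b\<in>Basis. (fst g y \<bullet> b) *\<^sub>R Ex (Dk k F y) (pre @ [b]) (map (\<lambda>g. fst g y) gs)) (\<Sum>b\<in>(Basis::'a set). 2 ^ N * (1 * snd g) * ?B)"
    subgoal by (rule Diff_sum[OF assms(1) finite_Basis]) (use T in auto)
    subgoal by (rule Bnd_sum[OF assms(1) finite_Basis]) (use T in auto)
    done
  have eqB: "(\<Sum>b\<in>(Basis::'a set). 2 ^ N * (1 * snd g) * ?B) =
      (real DIM('a) * 2 ^ N) ^ length (g # gs) * BF * prod_list (map snd (g # gs))"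
    by (simp add: algebra_simps)
  have Ex_cons: "(\<lambda>y. Ex (Dk k F y) pre (map (\<lambda>g. fst g y) (g # gs))) =
     (\<lambda>y. \<Sum>b\<in>Basis. (fst g y \<bullet> b) *\<^sub>R Ex (Dk k F y) (pre @ [b]) (map (\<lambda>g. fst g y) gs))" by simp
  show ?case unfolding Ex_cons using S(1) S(2)[unfolded eqB] by (rule conjI)
qed

lemma SM_comp:
  fixes F :: "'a::euclidean_space \<Rightarrow> 'b::real_normed_vector"
  assumes "open D"
    and HF: "\<And>ws. length ws = k \<Longrightarrow> set ws \<subseteq> Basis \<Longrightarrow> Diff N D (\<lambda>y. Dk k F y ws) \<and> Bnd N D (\<lambda>y. Dk k F y ws) BF"
    and "0 \<le> BF"
    and mlin: "\<And>y pre post. y \<in> D \<Longrightarrow> length pre + length post + 1 = k \<Longrightarrow> linear (\<lambda>v. Dk k F y (pre @ v # post))"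
    and gs: "\<forall>g\<in>set gs. Diff N D (fst g) \<and> Bnd N D (fst g) (snd g) \<and> 0 \<le> snd g"
    and len: "length gs = k"
  shows "Diff N D (\<lambda>y. Dk k F y (map (\<lambda>g. fst g y) gs)) \<and>
    Bnd N D (\<lambda>y. Dk k F y (map (\<lambda>g. fst g y) gs)) ((real DIM('a) * 2 ^ N) ^ k * BF * prod_list (map snd gs))"
proof -
  have E: "Diff N D (\<lambda>y. Ex (Dk k F y) [] (map (\<lambda>g. fst g y) gs)) \<and>
    Bnd N D (\<lambda>y. Ex (Dk k F y) [] (map (\<lambda>g. fst g y) gs)) ((real DIM('a) * 2 ^ N) ^ length gs * BF * prod_list (map snd gs))"
    by (rule SM_Ex[OF assms(1) HF assms(3) gs]) (use len in auto)
  have eq: "Ex (Dk k F y) [] (map (\<lambda>g. fst g y) gs) = Dk k F y (map (\<lambda>g. fst g y) gs)" if "y \<in> D" for y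
    using Ex_eq[of k "Dk k F y" "[]" "map (\<lambda>g. fst g y) gs"] mlin[OF that] len by simp
  show ?thesis using Diff_cong[OF assms(1) eq] Bnd_cong[OF assms(1) eq] E len by auto
qed


lemma map_margs: "map f (margs ks Q) = margs ks (\<lambda>q. f (Q q))"
  unfolding margs_def by (simp add: map_concat o_def)

lemma length_margs: "length (margs ks Q) = sum_list ks"
proof -
  have "length (margs ks Q) = sum_list (map (\<lambda>j. ks ! j) [0..<length ks])"
    unfolding margs_def by (simp add: length_concat o_def)
  also have "\<dots> = sum_list ks" by (simp add: map_nth)
  finally show ?thesis .
qed

lemma set_margs: "x \<in> set (margs ks Q) \<Longrightarrow> \<exists>t<length ks. 0 < ks ! t \<and> x = Q (Suc t)"
  unfolding margs_def by auto

lemma prod_list_margs: "prod_list (margs ks Q) = (\<Prod>j\<in>{0..<length ks}. Q (Suc j) ^ (ks ! j))"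
proof -
  have "prod_list (concat (map (\<lambda>j. replicate (ks!j) (Q (Suc j))) xs)) = prod_list (map (\<lambda>j. Q (Suc j) ^ (ks!j)) xs)" for xs
    by (induction xs) auto
  moreover have "(\<Prod>j\<leftarrow>[0..<length ks]. Q (Suc j) ^ (ks ! j)) = (\<Prod>j\<in>set [0..<length ks]. Q (Suc j) ^ (ks ! j))"
    by (rule prod.distinct_set_conv_list[symmetric]) simp
  ultimately show ?thesis unfolding margs_def by simp
qed

lemma Kset_idx:
  assumes "ks \<in> Kset i l" "t < length ks" "0 < ks ! t"
  shows "t \<le> l" "1 \<le> i"
proof -
  have len: "length ks = Suc l" and si: "sum_list ks = i" and sl: "(\<Sum>j<Suc l. j * ks ! j) = l"
    using assms(1) unfolding Kset_def by auto
  have "t * ks ! t \<le> (\<Sum>j<Suc l. j * ks ! j)"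
    by (rule member_le_sum) (use assms(2) len in auto)
  then have "t * ks ! t \<le> l" using sl by simp
  moreover have "t \<le> t * ks ! t" using assms(3) by (cases "ks ! t") auto
  ultimately show "t \<le> l" by linarith
  have "ks ! t \<le> sum_list ks" by (rule elem_le_sum_list) (rule assms(2))
  then show "1 \<le> i" using si assms(3) by simp
qed

lemma margs_idx:
  assumes "ks \<in> Kset i l" "x \<in> set (margs ks Q)"
  shows "\<exists>q. 1 \<le> q \<and> q \<le> i + l \<and> x = Q q"
proof -
  obtain t where t: "t < length ks" "0 < ks ! t" "x = Q (Suc t)" using set_margs[OF assms(2)] by auto
  show ?thesis using Kset_idx[OF assms(1) t(1,2)] t(3) by (intro exI[of _ "Suc t"]) auto
qed

lemma Kset_len: "ks \<in> Kset i l \<Longrightarrow> length (margs ks Q) = i"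
  using length_margs unfolding Kset_def by auto

lemma prod_margs_pow:
  fixes C s :: real
  assumes "ks \<in> Kset i l"
  shows "prod_list (margs ks (\<lambda>q. C * s ^ q)) = C ^ i * s ^ (i + l)"
proof -
  have len: "length ks = Suc l" and si: "sum_list ks = i" and sl: "(\<Sum>j<Suc l. j * ks ! j) = l"
    using assms(1) unfolding Kset_def by auto
  have si': "(\<Sum>j\<in>{0..<length ks}. ks ! j) = i" using si by (simp add: sum_list_sum_nth)
  have "prod_list (margs ks (\<lambda>q. C * s ^ q)) = (\<Prod>j\<in>{0..<length ks}. (C * s ^ Suc j) ^ (ks ! j))"
    by (rule prod_list_margs)
  also have "\<dots> = (\<Prod>j\<in>{0..<length ks}. C ^ (ks ! j) * s ^ (Suc j * ks ! j))"
  proof -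
    have pt: "(C * s ^ Suc j) ^ k = C ^ k * s ^ (Suc j * k)" for j k
      by (simp only: power_mult_distrib power_mult)
    show ?thesis by (simp only: pt)
  qed
  also have "\<dots> = (\<Prod>j\<in>{0..<length ks}. C ^ (ks ! j)) * (\<Prod>j\<in>{0..<length ks}. s ^ (Suc j * ks ! j))"
    by (rule prod.distrib)
  also have "\<dots> = C ^ (\<Sum>j\<in>{0..<length ks}. ks ! j) * s ^ (\<Sum>j\<in>{0..<length ks}. Suc j * ks ! j)"
    by (simp only: power_sum)
  also have "(\<Sum>j\<in>{0..<length ks}. Suc j * ks ! j) = (\<Sum>j\<in>{0..<length ks}. ks ! j) + (\<Sum>j<Suc l. j * ks ! j)"
    using len by (simp add: sum.distrib atLeast0LessThan)
  finally show ?thesis using si' sl by simp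
qed

lemma kcoef_bounds: "0 \<le> kcoef ks" "kcoef ks \<le> 1"
proof -
  have "0 < prod_list (map fact ks :: nat list)" by (induction ks) auto
  then have p: "1 \<le> real (prod_list (map fact ks :: nat list))" by linarith
  show "0 \<le> kcoef ks" unfolding kcoef_def by simp
  show "kcoef ks \<le> 1" unfolding kcoef_def using p by simp
qed


lemma finite_Kset: "finite (Kset i l)"
proof -
  have sub: "Kset i l \<subseteq> {ks. set ks \<subseteq> {0..i} \<and> length ks = Suc l}"
  proof
    fix ks assume a: "ks \<in> Kset i l"
    have len: "length ks = Suc l" and si: "sum_list ks = i" using a unfolding Kset_def by auto
    have "x \<le> i" if xin: "x \<in> set ks" for x
    proof -
      obtain t where t: "t < length ks" "ks ! t = x" using xin unfolding in_set_conv_nth by blast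
      have "ks ! t \<le> sum_list ks" by (rule elem_le_sum_list) (rule t(1))
      then show ?thesis using t(2) si by simp
    qed
    then have "set ks \<subseteq> {0..i}" by (simp add: subset_iff)
    then show "ks \<in> {ks. set ks \<subseteq> {0..i} \<and> length ks = Suc l}" using len by simp
  qed
  have "finite {ks. set ks \<subseteq> {0..i} \<and> length ks = Suc l}"
    by (rule finite_lists_length_eq) simp
  then show ?thesis using sub by (rule finite_subset[rotated])
qed

lemma opnorm_le_mono:
  fixes T :: "'a::real_normed_vector list \<Rightarrow> 'b::real_normed_vector"
  shows "opnorm_le T r A \<Longrightarrow> A \<le> B \<Longrightarrow> opnorm_le T r B"
  unfolding opnorm_le_def
proof (intro allI impI)
  fix us :: "'a list" assume a: "\<forall>us. length us = r \<longrightarrow> (\<forall>u\<in>set us. norm u \<le> 1) \<longrightarrow> norm (T us) \<le> A" "A \<le> B"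
    "length us = r" "\<forall>u\<in>set us. norm u \<le> 1"
  have "norm (T us) \<le> A" using a(1,3,4) by blast
  then show "norm (T us) \<le> B" using a(2) by linarith
qed

lemma p_term:
  fixes F :: "'a::euclidean_space \<Rightarrow> 'a" and P :: "nat \<Rightarrow> 'a \<Rightarrow> 'a"
  assumes "open D"
    and dF: "Diff (N + i) D F" "Bnd (N + i) D F BF" "0 \<le> BF"
    and ks: "ks \<in> Kset i l"
    and P: "\<And>q. 1 \<le> q \<Longrightarrow> q \<le> i + l \<Longrightarrow> Diff N D (P q) \<and> Bnd N D (P q) (C * s ^ q)"
    and C: "0 \<le> C" "0 \<le> s"
  shows "Diff N D (\<lambda>y. Dk i F y (margs ks (\<lambda>q. P q y))) \<and>
    Bnd N D (\<lambda>y. Dk i F y (margs ks (\<lambda>q. P q y))) ((real DIM('a) * 2 ^ N) ^ i * BF * (C ^ i * s ^ (i + l)))"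
proof -
  let ?gs = "margs ks (\<lambda>q. (P q, C * s ^ q))"
  have HF: "Diff N D (\<lambda>y. Dk i F y ws) \<and> Bnd N D (\<lambda>y. Dk i F y ws) BF"
    if "length ws = i" "set ws \<subseteq> Basis" for ws
  proof -
    have n: "\<forall>w\<in>set ws. norm w \<le> 1" using that(2) by auto
    show ?thesis using Dk_fixed_Diff[of N ws D F] Dk_fixed_Bnd[of N ws D F BF] dF n that(1) by simp
  qed
  have mlin: "linear (\<lambda>v. Dk i F y (pre @ v # post))" if "y \<in> D" "length pre + length post + 1 = i" for y pre post
    using Dk_multilin[OF assms(1) dF(1) that(1), of pre post] that(2) by simp
  have gs: "\<forall>g\<in>set ?gs. Diff N D (fst g) \<and> Bnd N D (fst g) (snd g) \<and> 0 \<le> snd g"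
  proof
    fix g assume gin: "g \<in> set ?gs"
    from margs_idx[OF ks gin] obtain q where q: "1 \<le> q" "q \<le> i + l" "g = (P q, C * s ^ q)" by blast
    show "Diff N D (fst g) \<and> Bnd N D (fst g) (snd g) \<and> 0 \<le> snd g" using P[OF q(1,2)] q(3) C by simp
  qed
  have len: "length ?gs = i" by (rule Kset_len[OF ks])
  have R: "Diff N D (\<lambda>y. Dk i F y (map (\<lambda>g. fst g y) ?gs)) \<and>
    Bnd N D (\<lambda>y. Dk i F y (map (\<lambda>g. fst g y) ?gs)) ((real DIM('a) * 2 ^ N) ^ i * BF * prod_list (map snd ?gs))"
    by (rule SM_comp[OF assms(1) HF dF(3) mlin gs len])
  have m1: "map (\<lambda>g. fst g y) ?gs = margs ks (\<lambda>q. P q y)" for y by (simp add: map_margs)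
  have m2: "prod_list (map snd ?gs) = C ^ i * s ^ (i + l)" using prod_margs_pow[OF ks] by (simp add: map_margs)
  show ?thesis using R unfolding m1 m2 .
qed

lemma c_term:
  fixes L :: "'a::euclidean_space \<Rightarrow> real" and P :: "nat \<Rightarrow> 'a \<Rightarrow> 'a"
  assumes "open D" and CL: "Ck_on K2 D L" and BL: "\<forall>\<theta>\<in>D. \<forall>k. 1 \<le> k \<longrightarrow> k \<le> K2 \<longrightarrow> opnorm_le (Dk k L \<theta>) k M"
    and M: "0 \<le> M" and lev: "Suc i + N \<le> K2"
    and ks: "ks \<in> Kset i l"
    and P: "\<And>q. 1 \<le> q \<Longrightarrow> q \<le> i + l \<Longrightarrow> Diff N D (P q) \<and> Bnd N D (P q) (C * s ^ q)"
    and C: "0 \<le> C" "0 \<le> s" and b: "b \<in> Basis"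
  shows "Diff N D (\<lambda>y. Dk (Suc i) L y (b # margs ks (\<lambda>q. P q y))) \<and>
    Bnd N D (\<lambda>y. Dk (Suc i) L y (b # margs ks (\<lambda>q. P q y))) ((real DIM('a) * 2 ^ N) ^ Suc i * M * (C ^ i * s ^ (i + l)))"
proof -
  let ?gs = "((\<lambda>y. b), 1::real) # margs ks (\<lambda>q. (P q, C * s ^ q))"
  have HF: "Diff N D (\<lambda>y. Dk (Suc i) L y ws) \<and> Bnd N D (\<lambda>y. Dk (Suc i) L y ws) M"
    if "length ws = Suc i" "set ws \<subseteq> Basis" for ws
  proof -
    have n: "\<forall>w\<in>set ws. norm w \<le> 1" using that(2) by auto
    show ?thesis using L_SM[OF CL BL, of "Suc i" N ws] lev n that(1) by simp
  qed
  have DL: "Diff K2 D L" using L_SM[OF CL BL, of 0 K2 "[]"] by simp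
  have mlin: "linear (\<lambda>v. Dk (Suc i) L y (pre @ v # post))" if "y \<in> D" "length pre + length post + 1 = Suc i" for y pre post
    using Dk_multilin[OF assms(1) DL that(1), of pre post] that(2) lev by simp
  have gs: "\<forall>g\<in>set ?gs. Diff N D (fst g) \<and> Bnd N D (fst g) (snd g) \<and> 0 \<le> snd g"
  proof
    fix g assume "g \<in> set ?gs"
    then consider "g = ((\<lambda>y. b), 1)" | "g \<in> set (margs ks (\<lambda>q. (P q, C * s ^ q)))" by auto
    then show "Diff N D (fst g) \<and> Bnd N D (fst g) (snd g) \<and> 0 \<le> snd g"
    proof cases
      case 1 then show ?thesis using Diff_const[of N D b] Bnd_const[of b 1 N D] b by simp
    next
      case 2
      from margs_idx[OF ks 2] obtain q where q: "1 \<le> q" "q \<le> i + l" "g = (P q, C * s ^ q)" by blast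
      show ?thesis using P[OF q(1,2)] q(3) C by simp
    qed
  qed
  have len: "length ?gs = Suc i" using Kset_len[OF ks] by simp
  have R: "Diff N D (\<lambda>y. Dk (Suc i) L y (map (\<lambda>g. fst g y) ?gs)) \<and>
    Bnd N D (\<lambda>y. Dk (Suc i) L y (map (\<lambda>g. fst g y) ?gs)) ((real DIM('a) * 2 ^ N) ^ Suc i * M * prod_list (map snd ?gs))"
    by (rule SM_comp[OF assms(1) HF M mlin gs len])
  have m1: "map (\<lambda>g. fst g y) ?gs = b # margs ks (\<lambda>q. P q y)" for y by (simp add: map_margs)
  have m2: "prod_list (map snd ?gs) = C ^ i * s ^ (i + l)" using prod_margs_pow[OF ks] by (simp add: map_margs)
  show ?thesis using R unfolding m1 m2 .
qed

definition SMb :: "nat \<Rightarrow> 'a::real_normed_vector set \<Rightarrow> ('a \<Rightarrow> 'b::real_normed_vector) \<Rightarrow> real \<Rightarrow> bool" where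
  "SMb N D f B \<longleftrightarrow> Diff N D f \<and> Bnd N D f B"

lemma SMb_lin:
  assumes "open D" "bounded_linear h" "\<And>z. norm (h z) \<le> Ch * norm z" "0 \<le> Ch" "SMb N D f B"
  shows "SMb N D (\<lambda>y. h (f y)) (Ch * B)"
  using assms Diff_lin[OF assms(1,2)] Bnd_lin[OF assms(1-4)] unfolding SMb_def by blast

lemma SMb_sum:
  assumes "open D" "finite A" "\<And>i. i \<in> A \<Longrightarrow> SMb N D (f i) (B i)"
  shows "SMb N D (\<lambda>y. \<Sum>i\<in>A. f i y) (\<Sum>i\<in>A. B i)"
proof -
  have "Diff N D (f i)" "Bnd N D (f i) (B i)" if "i \<in> A" for i using assms(3)[OF that] unfolding SMb_def by blast+
  then show ?thesis unfolding SMb_def using Diff_sum[OF assms(1,2)] Bnd_sum[OF assms(1,2)] by blast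
qed

lemma SMb_mono: "SMb N D f A \<Longrightarrow> A \<le> B \<Longrightarrow> SMb N D f B"
  unfolding SMb_def using Bnd_mono_B by blast

lemma SMb_mono_N: "SMb N D f B \<Longrightarrow> M \<le> N \<Longrightarrow> SMb M D f B"
  unfolding SMb_def using Bnd_mono_le Diff_mono_le by blast

lemma SMb_cong: "open D \<Longrightarrow> (\<And>y. y \<in> D \<Longrightarrow> f y = g y) \<Longrightarrow> SMb N D f B \<Longrightarrow> SMb N D g B"
  unfolding SMb_def using Bnd_cong Diff_cong by blast

lemma SMb_sum_le:
  assumes "open D" "finite A" "\<And>i. i \<in> A \<Longrightarrow> SMb N D (f i) (B i)" "(\<Sum>i\<in>A. B i) \<le> B'"
  shows "SMb N D (\<lambda>y. \<Sum>i\<in>A. f i y) B'"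
  using SMb_mono[OF SMb_sum[OF assms(1-3)] assms(4)] .

lemma SMb_scale:
  assumes "open D" "0 \<le> c" "SMb N D f B"
  shows "SMb N D (\<lambda>y. c *\<^sub>R f y) (c * B)"
  by (rule SMb_lin[OF assms(1) bounded_linear_scaleR_right _ assms(2,3)]) (simp add: assms(2))

lemma SMb_vec:
  fixes f :: "'a::real_normed_vector \<Rightarrow> real" and b :: "'b::real_normed_vector"
  assumes "open D" "norm b = 1" "SMb N D f B"
  shows "SMb N D (\<lambda>y. f y *\<^sub>R b) B"
  using SMb_lin[OF assms(1) bounded_linear_scaleR_left[of b] _ _ assms(3), of 1] assms(2) by simp

lemma SMb_neg:
  assumes "open D" "SMb N D f B"
  shows "SMb N D (\<lambda>y. - f y) B"
  using SMb_lin[OF assms(1) bounded_linear_minus[OF bounded_linear_ident] _ _ assms(2), of 1] by simp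

lemma sum_pow_le_suminf:
  fixes \<beta> :: real assumes "0 \<le> \<beta>" "\<beta> < 1" "finite A"
  shows "(\<Sum>k\<in>A. real k ^ e * \<beta> ^ k) \<le> suminf (\<lambda>k. real k ^ e * \<beta> ^ k)"
  by (rule sum_le_suminf[OF summable_poly_geom[OF assms(1,2)] assms(3)]) (simp add: assms(1))

lemma bound_mono:
  fixes G C M z :: real
  assumes "1 \<le> G" "1 \<le> C" "0 \<le> M" "1 \<le> z" "a \<le> m" "b \<le> m" "e1 \<le> e"
  shows "G ^ a * M * (C ^ b * z ^ e1) \<le> G ^ m * M * C ^ m * z ^ e"
proof -
  have "G ^ a \<le> G ^ m" by (rule power_increasing[OF assms(5,1)])
  moreover have "C ^ b \<le> C ^ m" by (rule power_increasing[OF assms(6,2)])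
  moreover have "z ^ e1 \<le> z ^ e" by (rule power_increasing[OF assms(7,4)])
  moreover have "0 \<le> G ^ a" "0 \<le> C ^ b" "0 \<le> z ^ e1" "0 \<le> C ^ m" using assms by auto
  ultimately have "G ^ a * M * (C ^ b * z ^ e1) \<le> G ^ m * M * (C ^ m * z ^ e)"
    using assms(3) by (intro mult_mono) auto
  then show ?thesis by (simp add: mult.assoc)
qed

lemma gvec_sum: "gvec T args = (\<Sum>b\<in>Basis. T (b # args) *\<^sub>R b)"
  by (simp add: gvec_def)

lemma c1_step:
  fixes L :: "nat \<Rightarrow> 'a::euclidean_space \<Rightarrow> real"
  assumes oD: "open D" and CL: "\<And>n. Ck_on K2 D (L n)"
    and BL: "\<And>n. \<forall>\<theta>\<in>D. \<forall>k. 1 \<le> k \<longrightarrow> k \<le> K2 \<longrightarrow> opnorm_le (Dk k (L n) \<theta>) k M"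
    and M: "0 \<le> M" and K2: "1 \<le> K2" and mc: "memoryless_coeffs \<beta> L D c p" and \<beta>: "0 \<le> \<beta>" "\<beta> < 1"
  shows "SMb (K2 - 1) D (c 1 n) (real DIM('a) * M * suminf (\<lambda>k. real k ^ 0 * \<beta> ^ k))"
proof -
  let ?N = "K2 - 1"
  have t1: "SMb ?N D (\<lambda>y. Dk 1 (L (n - k)) y [b]) M" if b: "b \<in> Basis" for k b
  proof -
    have "Diff ?N D (\<lambda>y. Dk 1 (L (n - k)) y [b]) \<and>
      (1 \<le> (1::nat) \<longrightarrow> (\<forall>w\<in>set [b]. norm w \<le> 1) \<longrightarrow> Bnd ?N D (\<lambda>y. Dk 1 (L (n - k)) y [b]) M)"
      by (rule L_SM[OF CL BL]) (use K2 in simp_all)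
    then show ?thesis unfolding SMb_def using b by simp
  qed
  have t3: "SMb ?N D (\<lambda>y. gvec (Dk 1 (L (n - k)) y) []) (real DIM('a) * M)" for k
  proof -
    have "SMb ?N D (\<lambda>y. \<Sum>b\<in>Basis. Dk 1 (L (n - k)) y [b] *\<^sub>R b) (\<Sum>b\<in>(Basis::'a set). M)"
      by (rule SMb_sum[OF oD finite_Basis]) (rule SMb_vec[OF oD _ t1], simp_all)
    then show ?thesis unfolding gvec_sum by simp
  qed
  have t5: "SMb ?N D (\<lambda>y. \<Sum>k\<le>n. \<beta> ^ k *\<^sub>R gvec (Dk 1 (L (n - k)) y) []) (real DIM('a) * M * suminf (\<lambda>k. real k ^ 0 * \<beta> ^ k))"
  proof (rule SMb_sum_le[OF oD finite_atMost])
    fix k assume "k \<in> {..n}"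
    show "SMb ?N D (\<lambda>y. \<beta> ^ k *\<^sub>R gvec (Dk 1 (L (n - k)) y) []) (\<beta> ^ k * (real DIM('a) * M))"
      by (rule SMb_scale[OF oD _ t3]) (use \<beta> in simp)
  next
    have "(\<Sum>k\<le>n. \<beta> ^ k * (real DIM('a) * M)) = real DIM('a) * M * (\<Sum>k\<le>n. real k ^ 0 * \<beta> ^ k)"
      by (simp add: sum_distrib_left sum_distrib_right mult.commute)
    also have "\<dots> \<le> real DIM('a) * M * suminf (\<lambda>k. real k ^ 0 * \<beta> ^ k)"
      by (rule mult_left_mono[OF sum_pow_le_suminf[OF \<beta> finite_atMost]]) (use M in simp)
    finally show "(\<Sum>k\<le>n. \<beta> ^ k * (real DIM('a) * M)) \<le> real DIM('a) * M * suminf (\<lambda>k. real k ^ 0 * \<beta> ^ k)" .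
  qed
  have eq: "- (\<Sum>k\<le>n. \<beta> ^ k *\<^sub>R gvec (Dk 1 (L (n - k)) y) []) = c 1 n y" if "y \<in> D" for y
    using mc that unfolding memoryless_coeffs_def by simp
  show ?thesis by (rule SMb_cong[OF oD eq SMb_neg[OF oD t5]])
qed

lemma sum_rearr: "(\<Sum>k\<in>A. (b::real) ^ k * (w * real k ^ e)) = w * (\<Sum>k\<in>A. real k ^ e * b ^ k)"
  by (simp add: sum_distrib_left mult_ac)

lemma cm_step:
  fixes L :: "nat \<Rightarrow> 'a::euclidean_space \<Rightarrow> real" and p :: "nat \<Rightarrow> nat \<Rightarrow> nat \<Rightarrow> 'a \<Rightarrow> 'a"
  assumes oD: "open D" and CL: "\<And>n. Ck_on K2 D (L n)"
    and BL: "\<And>n. \<forall>\<theta>\<in>D. \<forall>k. 1 \<le> k \<longrightarrow> k \<le> K2 \<longrightarrow> opnorm_le (Dk k (L n) \<theta>) k M"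
    and M: "0 \<le> M" and mc: "memoryless_coeffs \<beta> L D c p" and \<beta>: "0 \<le> \<beta>" "\<beta> < 1"
    and m1: "2 \<le> m1" "m1 \<le> K2" and C: "1 \<le> C"
    and IHp: "\<And>q n a. 1 \<le> q \<Longrightarrow> q < m1 \<Longrightarrow> a \<in> {1..n} \<Longrightarrow> SMb (K2 - m1) D (p q n a) (C * real a ^ q)"
  shows "SMb (K2 - m1) D (c m1 n)
    (real (\<Sum>i\<le>m1 - 1. card (Kset i (m1 - 1 - i))) * real DIM('a) *
      ((real DIM('a) * 2 ^ (K2 - m1)) ^ m1 * M * C ^ m1) * suminf (\<lambda>k. real k ^ (m1 - 1) * \<beta> ^ k))"
proof -
  let ?N = "K2 - m1"
  let ?G = "real DIM('a) * 2 ^ ?N"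
  let ?X = "?G ^ m1 * M * C ^ m1"
  let ?KC = "real (\<Sum>i\<le>m1 - 1. card (Kset i (m1 - 1 - i)))"
  let ?S = "suminf (\<lambda>k. real k ^ (m1 - 1) * \<beta> ^ k)"
  have G1: "1 \<le> ?G"
  proof -
    have "1 \<le> real DIM('a)" using DIM_positive[where 'a='a] by linarith
    moreover have "1 \<le> (2::real) ^ ?N" by (rule one_le_power) simp
    ultimately show ?thesis using mult_mono[of 1 "real DIM('a)" 1 "2 ^ ?N"] by simp
  qed
  have BLn: "\<forall>\<theta>\<in>D. \<forall>k. 1 \<le> k \<longrightarrow> k \<le> K2 \<longrightarrow> opnorm_le (Dk k (L n') \<theta>) k M" for n' by (rule BL)
  have t1: "SMb ?N D (\<lambda>y. Dk (Suc i) (L (n - k)) y (b # margs ks (\<lambda>q. p q n k y)) *\<^sub>R b) (?X * real k ^ (m1 - 1))"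
    if k: "k \<in> {1..n}" and i: "i \<le> m1 - 1" and ks: "ks \<in> Kset i (m1 - 1 - i)" and b: "b \<in> Basis" for k i ks b
  proof -
    have P: "Diff ?N D (p q n k) \<and> Bnd ?N D (p q n k) (C * real k ^ q)" if "1 \<le> q" "q \<le> i + (m1 - 1 - i)" for q
      using IHp[OF that(1) _ k] that(2) i m1 unfolding SMb_def by simp
    have T: "Diff ?N D (\<lambda>y. Dk (Suc i) (L (n - k)) y (b # margs ks (\<lambda>q. p q n k y))) \<and>
      Bnd ?N D (\<lambda>y. Dk (Suc i) (L (n - k)) y (b # margs ks (\<lambda>q. p q n k y))) (?G ^ Suc i * M * (C ^ i * real k ^ (i + (m1 - 1 - i))))"
      by (rule c_term[OF oD CL BLn M _ ks P _ _ b]) (use i m1 C in simp_all)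
    have le: "?G ^ Suc i * M * (C ^ i * real k ^ (i + (m1 - 1 - i))) \<le> ?X * real k ^ (m1 - 1)"
      by (rule bound_mono[OF G1 C M]) (use i m1 k in simp_all)
    have "SMb ?N D (\<lambda>y. Dk (Suc i) (L (n - k)) y (b # margs ks (\<lambda>q. p q n k y))) (?X * real k ^ (m1 - 1))"
      using SMb_mono[of ?N D _ _ "?X * real k ^ (m1 - 1)"] T le unfolding SMb_def by blast
    then show ?thesis by (rule SMb_vec[OF oD, rotated]) (use b in simp)
  qed
  have t2: "SMb ?N D (\<lambda>y. kcoef ks *\<^sub>R gvec (Dk (Suc i) (L (n - k)) y) (margs ks (\<lambda>q. p q n k y)))
      (real DIM('a) * (?X * real k ^ (m1 - 1)))"
    if k: "k \<in> {1..n}" and i: "i \<le> m1 - 1" and ks: "ks \<in> Kset i (m1 - 1 - i)" for k i ks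
  proof -
    have "SMb ?N D (\<lambda>y. \<Sum>b\<in>Basis. Dk (Suc i) (L (n - k)) y (b # margs ks (\<lambda>q. p q n k y)) *\<^sub>R b)
       (\<Sum>b\<in>(Basis::'a set). ?X * real k ^ (m1 - 1))"
      by (rule SMb_sum[OF oD finite_Basis t1[OF k i ks]])
    then have "SMb ?N D (\<lambda>y. gvec (Dk (Suc i) (L (n - k)) y) (margs ks (\<lambda>q. p q n k y)))
       (real DIM('a) * (?X * real k ^ (m1 - 1)))" unfolding gvec_sum by simp
    from SMb_scale[OF oD kcoef_bounds(1) this, of ks]
    have "SMb ?N D (\<lambda>y. kcoef ks *\<^sub>R gvec (Dk (Suc i) (L (n - k)) y) (margs ks (\<lambda>q. p q n k y)))
       (kcoef ks * (real DIM('a) * (?X * real k ^ (m1 - 1))))" .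
    moreover have "kcoef ks * (real DIM('a) * (?X * real k ^ (m1 - 1))) \<le> real DIM('a) * (?X * real k ^ (m1 - 1))"
    proof -
      have "0 \<le> real DIM('a) * (?X * real k ^ (m1 - 1))" using G1 M C by simp
      then show ?thesis using kcoef_bounds(2)[of ks] mult_right_mono by fastforce
    qed
    ultimately show ?thesis by (rule SMb_mono)
  qed
  have t3: "SMb ?N D (\<lambda>y. \<Sum>i\<le>m1 - 1. \<Sum>ks\<in>Kset i (m1 - 1 - i).
        kcoef ks *\<^sub>R gvec (Dk (Suc i) (L (n - k)) y) (margs ks (\<lambda>q. p q n k y)))
      (?KC * real DIM('a) * ?X * real k ^ (m1 - 1))"
    if k: "k \<in> {1..n}" for k
  proof (rule SMb_sum_le[OF oD finite_atMost])
    fix i assume i: "i \<in> {..m1 - 1}"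
    show "SMb ?N D (\<lambda>y. \<Sum>ks\<in>Kset i (m1 - 1 - i).
        kcoef ks *\<^sub>R gvec (Dk (Suc i) (L (n - k)) y) (margs ks (\<lambda>q. p q n k y)))
      (\<Sum>ks\<in>Kset i (m1 - 1 - i). real DIM('a) * (?X * real k ^ (m1 - 1)))"
      by (rule SMb_sum[OF oD finite_Kset t2[OF k]]) (use i in auto)
  next
    show "(\<Sum>i\<le>m1 - 1. \<Sum>ks\<in>Kset i (m1 - 1 - i). real DIM('a) * (?X * real k ^ (m1 - 1))) \<le>
      ?KC * real DIM('a) * ?X * real k ^ (m1 - 1)"
      by (simp add: sum_distrib_right mult.assoc)
  qed
  have t4: "SMb ?N D (\<lambda>y. \<Sum>k\<in>{1..n}. \<beta> ^ k *\<^sub>R (\<Sum>i\<le>m1 - 1. \<Sum>ks\<in>Kset i (m1 - 1 - i).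
        kcoef ks *\<^sub>R gvec (Dk (Suc i) (L (n - k)) y) (margs ks (\<lambda>q. p q n k y))))
      (?KC * real DIM('a) * ?X * ?S)"
  proof (rule SMb_sum_le[OF oD finite_atLeastAtMost])
    fix k assume k: "k \<in> {1..n}"
    show "SMb ?N D (\<lambda>y. \<beta> ^ k *\<^sub>R (\<Sum>i\<le>m1 - 1. \<Sum>ks\<in>Kset i (m1 - 1 - i).
        kcoef ks *\<^sub>R gvec (Dk (Suc i) (L (n - k)) y) (margs ks (\<lambda>q. p q n k y))))
      (\<beta> ^ k * (?KC * real DIM('a) * ?X * real k ^ (m1 - 1)))"
      by (rule SMb_scale[OF oD _ t3[OF k]]) (use \<beta> in simp)
  next
    have a: "0 \<le> ?KC" by (rule of_nat_0_le_iff)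
    have b: "0 \<le> ?X" using G1 M C by (intro mult_nonneg_nonneg zero_le_power) simp_all
    have nn: "0 \<le> ?KC * real DIM('a) * ?X" by (rule mult_nonneg_nonneg[OF mult_nonneg_nonneg[OF a] b]) simp
    have "(\<Sum>k\<in>{1..n}. \<beta> ^ k * (?KC * real DIM('a) * ?X * real k ^ (m1 - 1))) =
        ?KC * real DIM('a) * ?X * (\<Sum>k\<in>{1..n}. real k ^ (m1 - 1) * \<beta> ^ k)"
      by (rule sum_rearr)
    also have "\<dots> \<le> ?KC * real DIM('a) * ?X * ?S"
      by (rule mult_left_mono[OF sum_pow_le_suminf[OF \<beta> finite_atLeastAtMost] nn])
    finally show "(\<Sum>k\<in>{1..n}. \<beta> ^ k * (?KC * real DIM('a) * ?X * real k ^ (m1 - 1))) \<le> ?KC * real DIM('a) * ?X * ?S" .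
  qed
  have eq: "- (\<Sum>k\<in>{1..n}. \<beta> ^ k *\<^sub>R (\<Sum>i\<le>m1 - 1. \<Sum>ks\<in>Kset i (m1 - 1 - i).
        kcoef ks *\<^sub>R gvec (Dk (Suc i) (L (n - k)) y) (margs ks (\<lambda>q. p q n k y)))) = c m1 n y" if "y \<in> D" for y
  proof -
    have "\<forall>m\<ge>2. \<forall>n. \<forall>\<theta>\<in>D. c m n \<theta> = - (\<Sum>k\<in>{1..n}. \<beta> ^ k *\<^sub>R
             (\<Sum>i\<le>m - 1. \<Sum>ks\<in>Kset i (m - 1 - i).
                kcoef ks *\<^sub>R gvec (Dk (Suc i) (L (n - k)) \<theta>) (margs ks (\<lambda>q. p q n k \<theta>))))"
      using mc unfolding memoryless_coeffs_def by blast
    then show ?thesis using that m1(1) by simp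
  qed
  show ?thesis by (rule SMb_cong[OF oD eq SMb_neg[OF oD t4]])
qed

lemma sum3_const: "(\<Sum>j\<in>A. \<Sum>i\<in>B j. \<Sum>ks\<in>E j i. (W::real)) = real (\<Sum>j\<in>A. \<Sum>i\<in>B j. card (E j i)) * W"
  by (simp add: sum_distrib_right)

lemma pm_step:
  fixes c :: "nat \<Rightarrow> nat \<Rightarrow> 'a::euclidean_space \<Rightarrow> 'a" and p :: "nat \<Rightarrow> nat \<Rightarrow> nat \<Rightarrow> 'a \<Rightarrow> 'a"
  assumes oD: "open D" and mc: "memoryless_coeffs \<beta> L D c p"
    and m1: "1 \<le> m1" "m1 \<le> K2" and C: "1 \<le> C"
    and IHc: "\<And>j n'. 1 \<le> j \<Longrightarrow> j \<le> m1 \<Longrightarrow> SMb (K2 - j) D (c j n') C"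
    and IHp: "\<And>q n a. 1 \<le> q \<Longrightarrow> q < m1 \<Longrightarrow> a \<in> {1..n} \<Longrightarrow> SMb (K2 - m1) D (p q n a) (C * real a ^ q)"
    and a: "a \<in> {1..n}"
  shows "SMb (K2 - m1) D (p m1 n a)
    (real (\<Sum>j\<in>{1..m1}. \<Sum>i\<le>m1 - j. card (Kset i (m1 - j - i))) *
      ((real DIM('a) * 2 ^ (K2 - m1)) ^ m1 * C * C ^ m1) * real a ^ m1)"
proof -
  let ?N = "K2 - m1"
  let ?G = "real DIM('a) * 2 ^ ?N"
  let ?Z = "?G ^ m1 * C * C ^ m1"
  let ?KP = "real (\<Sum>j\<in>{1..m1}. \<Sum>i\<le>m1 - j. card (Kset i (m1 - j - i)))"
  have G1: "1 \<le> ?G"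
  proof -
    have "1 \<le> real DIM('a)" using DIM_positive[where 'a='a] by linarith
    moreover have "1 \<le> (2::real) ^ ?N" by (rule one_le_power) simp
    ultimately show ?thesis using mult_mono[of 1 "real DIM('a)" 1 "2 ^ ?N"] by simp
  qed
  have Z0: "0 \<le> ?Z" using G1 C by (intro mult_nonneg_nonneg zero_le_power) simp_all
  have t1: "SMb ?N D (\<lambda>y. kcoef ks *\<^sub>R Dk i (c j (n - s)) y (margs ks (\<lambda>q. p q n s y))) (?Z * real s ^ (m1 - 1))"
    if s: "s \<in> {1..a}" and j: "j \<in> {1..m1}" and i: "i \<le> m1 - j" and ks: "ks \<in> Kset i (m1 - j - i)" for s j i ks
  proof -
    have sn: "s \<in> {1..n}" using s a by simp
    have cj: "SMb (?N + i) D (c j (n - s)) C"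
      by (rule SMb_mono_N[OF IHc]) (use j i m1 in auto)
    have P: "Diff ?N D (p q n s) \<and> Bnd ?N D (p q n s) (C * real s ^ q)" if "1 \<le> q" "q \<le> i + (m1 - j - i)" for q
    proof -
      have "q < m1" using that(2) i j by auto
      then show ?thesis using IHp[OF that(1) _ sn] unfolding SMb_def by simp
    qed
    have T: "Diff ?N D (\<lambda>y. Dk i (c j (n - s)) y (margs ks (\<lambda>q. p q n s y))) \<and>
      Bnd ?N D (\<lambda>y. Dk i (c j (n - s)) y (margs ks (\<lambda>q. p q n s y))) (?G ^ i * C * (C ^ i * real s ^ (i + (m1 - j - i))))"
      using cj unfolding SMb_def
      by (intro p_term[OF oD _ _ _ ks P]) (use C s in simp_all)
    have le: "?G ^ i * C * (C ^ i * real s ^ (i + (m1 - j - i))) \<le> ?Z * real s ^ (m1 - 1)"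
    proof -
      have e: "i + (m1 - j - i) \<le> m1 - 1" using i j by auto
      show ?thesis by (rule bound_mono[OF G1 C]) (use i j s C e in simp_all)
    qed
    have T2: "SMb ?N D (\<lambda>y. Dk i (c j (n - s)) y (margs ks (\<lambda>q. p q n s y))) (?Z * real s ^ (m1 - 1))"
      using SMb_mono[of ?N D _ _ "?Z * real s ^ (m1 - 1)"] T le unfolding SMb_def by blast
    from SMb_scale[OF oD kcoef_bounds(1) T2, of ks]
    have "SMb ?N D (\<lambda>y. kcoef ks *\<^sub>R Dk i (c j (n - s)) y (margs ks (\<lambda>q. p q n s y)))
       (kcoef ks * (?Z * real s ^ (m1 - 1)))" .
    moreover have "kcoef ks * (?Z * real s ^ (m1 - 1)) \<le> ?Z * real s ^ (m1 - 1)"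
    proof -
      have "0 \<le> ?Z * real s ^ (m1 - 1)" using Z0 by simp
      then show ?thesis using kcoef_bounds(2)[of ks] mult_right_mono by fastforce
    qed
    ultimately show ?thesis by (rule SMb_mono)
  qed
  have T: "SMb ?N D (\<lambda>y. \<Sum>s\<in>{1..a}. \<Sum>j\<in>{1..m1}. \<Sum>i\<le>m1 - j. \<Sum>ks\<in>Kset i (m1 - j - i).
        kcoef ks *\<^sub>R Dk i (c j (n - s)) y (margs ks (\<lambda>q. p q n s y)))
     (\<Sum>s\<in>{1..a}. \<Sum>j\<in>{1..m1}. \<Sum>i\<le>m1 - j. \<Sum>ks\<in>Kset i (m1 - j - i). ?Z * real s ^ (m1 - 1))"
    apply (rule SMb_sum[OF oD finite_atLeastAtMost])
    apply (rule SMb_sum[OF oD finite_atLeastAtMost])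
    apply (rule SMb_sum[OF oD finite_atMost])
    apply (rule SMb_sum[OF oD finite_Kset])
    apply (rule t1)
       apply auto
    done
  have le: "(\<Sum>s\<in>{1..a}. \<Sum>j\<in>{1..m1}. \<Sum>i\<le>m1 - j. \<Sum>ks\<in>Kset i (m1 - j - i). ?Z * real s ^ (m1 - 1))
      \<le> ?KP * ?Z * real a ^ m1"
  proof -
    have "(\<Sum>s\<in>{1..a}. \<Sum>j\<in>{1..m1}. \<Sum>i\<le>m1 - j. \<Sum>ks\<in>Kset i (m1 - j - i). ?Z * real s ^ (m1 - 1))
        = (\<Sum>s\<in>{1..a}. ?KP * (?Z * real s ^ (m1 - 1)))"
      by (rule sum.cong[OF refl], rule sum3_const)
    also have "\<dots> \<le> (\<Sum>s\<in>{1..a}. ?KP * (?Z * real a ^ (m1 - 1)))"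
    proof (rule sum_mono)
      fix s assume s: "s \<in> {1..a}"
      have "real s ^ (m1 - 1) \<le> real a ^ (m1 - 1)" using s by (intro power_mono) auto
      then show "?KP * (?Z * real s ^ (m1 - 1)) \<le> ?KP * (?Z * real a ^ (m1 - 1))"
        using Z0 by (intro mult_left_mono of_nat_0_le_iff) simp_all
    qed
    also have "\<dots> = real a * (?KP * (?Z * real a ^ (m1 - 1)))" by simp
    also have "\<dots> = ?KP * ?Z * (real a * real a ^ (m1 - 1))" by (simp only: mult_ac)
    also have "real a * real a ^ (m1 - 1) = real a ^ m1" using m1(1)
      by (metis One_nat_def Suc_diff_le diff_Suc_1 power_Suc)
    finally show ?thesis .
  qed
  have eq: "- (\<Sum>s\<in>{1..a}. \<Sum>j\<in>{1..m1}. \<Sum>i\<le>m1 - j. \<Sum>ks\<in>Kset i (m1 - j - i).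
        kcoef ks *\<^sub>R Dk i (c j (n - s)) y (margs ks (\<lambda>q. p q n s y))) = p m1 n a y" if "y \<in> D" for y
  proof -
    have "\<forall>m\<ge>1. \<forall>n. \<forall>a\<in>{1..n}. \<forall>\<theta>\<in>D. p m n a \<theta> =
        - (\<Sum>s\<in>{1..a}. \<Sum>j\<in>{1..m}. \<Sum>i\<le>m - j. \<Sum>ks\<in>Kset i (m - j - i).
             kcoef ks *\<^sub>R Dk i (c j (n - s)) \<theta> (margs ks (\<lambda>q. p q n s \<theta>)))"
      using mc unfolding memoryless_coeffs_def by blast
    then show ?thesis using that m1(1) a by simp
  qed
  show ?thesis by (rule SMb_cong[OF oD eq SMb_neg[OF oD SMb_mono[OF T le]]])
qed

lemma main_claim:
  fixes K :: nat and \<beta> M :: real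
  assumes \<beta>: "0 < \<beta>" "\<beta> < 1"
  shows "\<exists>C\<ge>1. \<forall>(D::'a::euclidean_space set) (L::nat \<Rightarrow> 'a \<Rightarrow> real) (c::nat \<Rightarrow> nat \<Rightarrow> 'a \<Rightarrow> 'a) p.
     open D \<longrightarrow> (\<forall>n. Ck_on (2 * K) D (L n)) \<longrightarrow>
     (\<forall>n k. \<forall>\<theta>\<in>D. 1 \<le> k \<longrightarrow> k \<le> 2 * K \<longrightarrow> opnorm_le (Dk k (L n) \<theta>) k M) \<longrightarrow>
     memoryless_coeffs \<beta> L D c p \<longrightarrow>
     (\<forall>m'. 1 \<le> m' \<longrightarrow> m' \<le> m \<longrightarrow> m' \<le> K \<longrightarrow>
        (\<forall>n. SMb (2 * K - m') D (c m' n) C \<and> (\<forall>a\<in>{1..n}. SMb (2 * K - m') D (p m' n a) (C * real a ^ m'))))"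
proof (induction m)
  case 0 show ?case by (intro exI[of _ 1]) auto
next
  case (Suc m)
  then obtain C where C1: "1 \<le> C" and HC: "\<forall>(D::'a::euclidean_space set) (L::nat \<Rightarrow> 'a \<Rightarrow> real) (c::nat \<Rightarrow> nat \<Rightarrow> 'a \<Rightarrow> 'a) p.
     open D \<longrightarrow> (\<forall>n. Ck_on (2 * K) D (L n)) \<longrightarrow>
     (\<forall>n k. \<forall>\<theta>\<in>D. 1 \<le> k \<longrightarrow> k \<le> 2 * K \<longrightarrow> opnorm_le (Dk k (L n) \<theta>) k M) \<longrightarrow>
     memoryless_coeffs \<beta> L D c p \<longrightarrow>
     (\<forall>m'. 1 \<le> m' \<longrightarrow> m' \<le> m \<longrightarrow> m' \<le> K \<longrightarrow>
        (\<forall>n. SMb (2 * K - m') D (c m' n) C \<and> (\<forall>a\<in>{1..n}. SMb (2 * K - m') D (p m' n a) (C * real a ^ m'))))"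
    by blast
  show ?case
  proof (cases "Suc m \<le> K")
    case False
    show ?thesis
    proof (intro exI[of _ C] conjI allI impI)
      show "1 \<le> C" by (rule C1)
    next
      fix D :: "'a set" and L :: "nat \<Rightarrow> 'a \<Rightarrow> real" and c :: "nat \<Rightarrow> nat \<Rightarrow> 'a \<Rightarrow> 'a" and p :: "nat \<Rightarrow> nat \<Rightarrow> nat \<Rightarrow> 'a \<Rightarrow> 'a"
        and m' n
      assume h: "open D" "\<forall>n. Ck_on (2 * K) D (L n)"
        "\<forall>n k. \<forall>\<theta>\<in>D. 1 \<le> k \<longrightarrow> k \<le> 2 * K \<longrightarrow> opnorm_le (Dk k (L n) \<theta>) k M"
        "memoryless_coeffs \<beta> L D c p" "1 \<le> m'" "m' \<le> Suc m" "m' \<le> K"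
      have "m' \<le> m" using h(6,7) False by simp
      then have R: "SMb (2 * K - m') D (c m' n) C \<and> (\<forall>a\<in>{1..n}. SMb (2 * K - m') D (p m' n a) (C * real a ^ m'))"
        using HC h by blast
      show "SMb (2 * K - m') D (c m' n) C" using R by blast
      show "\<forall>a\<in>{1..n}. SMb (2 * K - m') D (p m' n a) (C * real a ^ m')" using R by blast
    qed
  next
    case True
    define m1 where "m1 = Suc m"
    define K2 where "K2 = 2 * K"
    define G where "G = real DIM('a) * 2 ^ (K2 - m1)"
    define M' where "M' = max M 0"
    define Cc where "Cc = (if m1 = 1 then real DIM('a) * M' * suminf (\<lambda>k. real k ^ 0 * \<beta> ^ k)
      else real (\<Sum>i\<le>m1 - 1. card (Kset i (m1 - 1 - i))) * real DIM('a) *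
      (G ^ m1 * M' * C ^ m1) * suminf (\<lambda>k. real k ^ (m1 - 1) * \<beta> ^ k))"
    define Cm where "Cm = max C Cc"
    define Cp where "Cp = real (\<Sum>j\<in>{1..m1}. \<Sum>i\<le>m1 - j. card (Kset i (m1 - j - i))) * (G ^ m1 * Cm * Cm ^ m1)"
    define C' where "C' = max Cm Cp"
    have m1K: "1 \<le> m1" "m1 \<le> K" "m1 \<le> K2" using True unfolding m1_def K2_def by auto
    have CmC: "C \<le> Cm" "Cc \<le> Cm" "1 \<le> Cm" using C1 unfolding Cm_def by auto
    have CC': "Cm \<le> C'" "Cp \<le> C'" unfolding C'_def by auto
    show ?thesis
    proof (intro exI[of _ C'] conjI allI impI)
      show "1 \<le> C'" using CmC CC' by linarith
    next
      fix D :: "'a set" and L :: "nat \<Rightarrow> 'a \<Rightarrow> real" and c :: "nat \<Rightarrow> nat \<Rightarrow> 'a \<Rightarrow> 'a" and p :: "nat \<Rightarrow> nat \<Rightarrow> nat \<Rightarrow> 'a \<Rightarrow> 'a"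
        and m' n
      assume h: "open D" "\<forall>n. Ck_on (2 * K) D (L n)"
        "\<forall>n k. \<forall>\<theta>\<in>D. 1 \<le> k \<longrightarrow> k \<le> 2 * K \<longrightarrow> opnorm_le (Dk k (L n) \<theta>) k M"
        "memoryless_coeffs \<beta> L D c p" "1 \<le> m'" "m' \<le> Suc m" "m' \<le> K"
      have prev: "SMb (K2 - q) D (c q n') C \<and> (\<forall>a\<in>{1..n'}. SMb (K2 - q) D (p q n' a) (C * real a ^ q))"
        if "1 \<le> q" "q \<le> m" for q n'
        using HC h(1-4) that m1K unfolding K2_def m1_def by auto
      have CL: "Ck_on K2 D (L n')" for n' using h(2) unfolding K2_def by blast
      have BL: "\<forall>\<theta>\<in>D. \<forall>k. 1 \<le> k \<longrightarrow> k \<le> K2 \<longrightarrow> opnorm_le (Dk k (L n') \<theta>) k M'" for n'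
      proof (intro ballI allI impI)
        fix \<theta> k assume a: "\<theta> \<in> D" "1 \<le> k" "k \<le> K2"
        then have "opnorm_le (Dk k (L n') \<theta>) k M" using h(3) unfolding K2_def by blast
        then show "opnorm_le (Dk k (L n') \<theta>) k M'" by (rule opnorm_le_mono) (simp add: M'_def)
      qed
      have M0: "0 \<le> M'" unfolding M'_def by simp
      have \<beta>0: "0 \<le> \<beta>" using \<beta> by simp
      have IHp: "SMb (K2 - m1) D (p q n' a) (C * real a ^ q)" if "1 \<le> q" "q < m1" "a \<in> {1..n'}" for q n' a
      proof -
        have "q \<le> m" using that(2) unfolding m1_def by simp
        then have "SMb (K2 - q) D (p q n' a) (C * real a ^ q)" using prev[OF that(1)] that(3) by blast
        then show ?thesis by (rule SMb_mono_N) (use that(2) in simp)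
      qed
      have cnew: "SMb (K2 - m1) D (c m1 n') Cc" for n'
      proof (cases "m1 = 1")
        case True
        have "SMb (K2 - 1) D (c 1 n') (real DIM('a) * M' * suminf (\<lambda>k. real k ^ 0 * \<beta> ^ k))"
          by (rule c1_step[OF h(1) CL BL M0 _ h(4) \<beta>0 \<beta>(2)]) (use m1K in simp)
        then show ?thesis using True unfolding Cc_def by simp
      next
        case False
        have "SMb (K2 - m1) D (c m1 n')
          (real (\<Sum>i\<le>m1 - 1. card (Kset i (m1 - 1 - i))) * real DIM('a) *
           ((real DIM('a) * 2 ^ (K2 - m1)) ^ m1 * M' * C ^ m1) * suminf (\<lambda>k. real k ^ (m1 - 1) * \<beta> ^ k))"
          by (rule cm_step[OF h(1) CL BL M0 h(4) \<beta>0 \<beta>(2) _ m1K(3) C1 IHp]) (use False m1K in simp_all)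
        then show ?thesis using False unfolding Cc_def G_def by simp
      qed
      have pnew: "SMb (K2 - m1) D (p m1 n' a) (Cp * real a ^ m1)" if a: "a \<in> {1..n'}" for n' a
      proof -
        have IHc: "SMb (K2 - j) D (c j n'') Cm" if "1 \<le> j" "j \<le> m1" for j n''
        proof (cases "j = m1")
          case True then show ?thesis using SMb_mono[OF cnew CmC(2)] by simp
        next
          case False
          then have "j \<le> m" using that unfolding m1_def by simp
          then show ?thesis using prev[OF that(1)] SMb_mono CmC(1) by blast
        qed
        have IHp': "SMb (K2 - m1) D (p q n'' a') (Cm * real a' ^ q)" if "1 \<le> q" "q < m1" "a' \<in> {1..n''}" for q n'' a'
          by (rule SMb_mono[OF IHp[OF that]]) (use CmC(1) in \<open>simp add: mult_right_mono\<close>)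
        have "SMb (K2 - m1) D (p m1 n' a)
          (real (\<Sum>j\<in>{1..m1}. \<Sum>i\<le>m1 - j. card (Kset i (m1 - j - i))) *
            ((real DIM('a) * 2 ^ (K2 - m1)) ^ m1 * Cm * Cm ^ m1) * real a ^ m1)"
          by (rule pm_step[OF h(1) h(4) m1K(1) m1K(3) CmC(3) IHc IHp' a])
        then show ?thesis unfolding Cp_def G_def by simp
      qed
      show "SMb (2 * K - m') D (c m' n) C'"
      proof (cases "m' = m1")
        case True
        then show ?thesis using SMb_mono[OF cnew] CmC(2) CC'(1) unfolding K2_def by fastforce
      next
        case False
        then have "m' \<le> m" using h(6) unfolding m1_def by simp
        then have "SMb (K2 - m') D (c m' n) C" using prev[OF h(5)] by blast
        then show ?thesis using SMb_mono CmC(1) CC'(1) unfolding K2_def by fastforce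
      qed
      show "\<forall>a\<in>{1..n}. SMb (2 * K - m') D (p m' n a) (C' * real a ^ m')"
      proof
        fix a assume a: "a \<in> {1..n}"
        show "SMb (2 * K - m') D (p m' n a) (C' * real a ^ m')"
        proof (cases "m' = m1")
          case True
          have "Cp * real a ^ m1 \<le> C' * real a ^ m1" using CC'(2) by (simp add: mult_right_mono)
          then show ?thesis using SMb_mono[OF pnew[OF a]] True unfolding K2_def by blast
        next
          case False
          then have "m' \<le> m" using h(6) unfolding m1_def by simp
          then have "SMb (K2 - m') D (p m' n a) (C * real a ^ m')" using prev[OF h(5)] a by blast
          moreover have "C * real a ^ m' \<le> C' * real a ^ m'" using CmC(1) CC'(1) by (simp add: mult_right_mono)
          ultimately show ?thesis using SMb_mono unfolding K2_def by blast
        qed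
      qed
    qed
  qed
qed

theorem mainTheorem3:
  fixes K :: nat and \<beta> M :: real
  assumes "K \<ge> 2" and "0 < \<beta>" and "\<beta> < 1"
  shows "\<exists>C. \<forall>(D :: 'a::euclidean_space set) L c p.
     open D \<longrightarrow> convex D \<longrightarrow>
     (\<forall>n. Ck_on (2 * K) D (L n)) \<longrightarrow>
     (\<forall>n k. \<forall>\<theta>\<in>D. 1 \<le> k \<longrightarrow> k \<le> 2 * K \<longrightarrow> opnorm_le (Dk k (L n) \<theta>) k M) \<longrightarrow>
     memoryless_coeffs \<beta> L D c p \<longrightarrow>
     (\<forall>\<theta>\<in>D. \<forall>m\<in>{1..K}. \<forall>r\<le>2 * K - m. \<forall>n.
        opnorm_le (Dk r (c m n) \<theta>) r C \<and>
        (\<forall>a\<in>{1..n}. opnorm_le (Dk r (p m n a) \<theta>) r (C * real a ^ m)))"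
proof -
  obtain C where H: "\<forall>(D::'a::euclidean_space set) (L::nat \<Rightarrow> 'a \<Rightarrow> real) (c::nat \<Rightarrow> nat \<Rightarrow> 'a \<Rightarrow> 'a) p.
     open D \<longrightarrow> (\<forall>n. Ck_on (2 * K) D (L n)) \<longrightarrow>
     (\<forall>n k. \<forall>\<theta>\<in>D. 1 \<le> k \<longrightarrow> k \<le> 2 * K \<longrightarrow> opnorm_le (Dk k (L n) \<theta>) k M) \<longrightarrow>
     memoryless_coeffs \<beta> L D c p \<longrightarrow>
     (\<forall>m'. 1 \<le> m' \<longrightarrow> m' \<le> K \<longrightarrow> m' \<le> K \<longrightarrow>
        (\<forall>n. SMb (2 * K - m') D (c m' n) C \<and> (\<forall>a\<in>{1..n}. SMb (2 * K - m') D (p m' n a) (C * real a ^ m'))))"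
    using main_claim[OF assms(2,3), of K M K] by blast
  show ?thesis
  proof (intro exI[of _ C] allI impI ballI conjI)
    fix D :: "'a set" and L :: "nat \<Rightarrow> 'a \<Rightarrow> real" and c :: "nat \<Rightarrow> nat \<Rightarrow> 'a \<Rightarrow> 'a" and p :: "nat \<Rightarrow> nat \<Rightarrow> nat \<Rightarrow> 'a \<Rightarrow> 'a"
      and \<theta> m r n
    assume h: "open D" "convex D" "\<forall>n. Ck_on (2 * K) D (L n)"
      "\<forall>n k. \<forall>\<theta>\<in>D. 1 \<le> k \<longrightarrow> k \<le> 2 * K \<longrightarrow> opnorm_le (Dk k (L n) \<theta>) k M"
      "memoryless_coeffs \<beta> L D c p" "\<theta> \<in> D" "m \<in> {1..K}" "r \<le> 2 * K - m"
    have R: "SMb (2 * K - m) D (c m n) C \<and> (\<forall>a\<in>{1..n}. SMb (2 * K - m) D (p m n a) (C * real a ^ m))"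
      using H h(1,3,4,5,7) by auto
    show "opnorm_le (Dk r (c m n) \<theta>) r C"
      using Bnd_opnorm[of "2 * K - m" D "c m n" C r \<theta>] R h(6,8) unfolding SMb_def by blast
    fix a assume a: "a \<in> {1..n}"
    show "opnorm_le (Dk r (p m n a) \<theta>) r (C * real a ^ m)"
      using Bnd_opnorm[of "2 * K - m" D "p m n a" "C * real a ^ m" r \<theta>] R a h(6,8) unfolding SMb_def by blast
  qed
qed

end
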